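(* Let $p$ be an imitation kernel $p(g\mid \mathbf w)=\sum_{k\in\mathcal A}\theta_kP_{(k)}(w_{-k},g)$ on a finite set $G$. If the $G$-stochastic function $k\mapsto P_{(k)}$ has more than one closed intercommunicating class, then $|\mathcal G(p)|>1$.
   Context: $G$ finite. A transition kernel is a map $p:G\times G^{-\mathbb N_+}\to[0,1]$ with $p(\cdot\mid \mathbf w)$ a probability on $G$ for every $\mathbf w=(w_{-1},w_{-2},\dots)$. An imitation kernel has the form $p(g\mid\mathbf w)=\sum_{k\in\mathcal A}\theta_kP_{(k)}(w_{-k},g)$, where $\mathcal A\subset\mathbb N_+$, $\theta=(\theta_k)_{k\in\mathcal A}$ is a probability distribution with $\theta_k>0$ for all $k\in\mathcal A$, and each $P_{(k)}$ is a stochastic matrix on $G$. A process $\mathbf X=(X_n)_{n\in\mathbb Z}$ (or its law on $G^{\mathbb Z}$) is compatible with $p$ if $P(X_n=g\mid X_{n-1},X_{n-2},\dots)=p(g\mid X_{n-1},X_{n-2},\dots)$ a.s. for all $n\in\mathbb Z$, $g\in G$; $\mathcal G(p)$ is the set of compatible laws. Words: $\mathcal A^*=\bigcup_{n\ge1}\mathcal A^n$, $P_{\mathbf a}=P_{(a_n)}\cdots P_{(a_1)}$ for $\mathbf a=(a_1,\dots,a_n)$. $i$ communicates with $j\ne i$ if $P_{\mathbf a}(i,j)>0$ for some word; intercommunication (each state with itself included) is an equivalence relation; a class $C$ is closed if $i\in C$ communicating with $j$ implies $j\in C$. *)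

theory Defs
  imports "HOL-Probability.Probability"
begin

text \<open>A past configuration w = (w_{-1}, w_{-2}, ...) is encoded as a function
  w :: nat => 'g with  w k = w_{-k}  for k >= 1 (the value w 0 is irrelevant).\<close>

definition stochastic_matrix :: "('g::finite \<Rightarrow> 'g \<Rightarrow> real) \<Rightarrow> bool" where
  "stochastic_matrix Q \<longleftrightarrow> (\<forall>i j. 0 \<le> Q i j) \<and> (\<forall>i. (\<Sum>j\<in>UNIV. Q i j) = 1)"

definition transition_kernel :: "('g::finite \<Rightarrow> (nat \<Rightarrow> 'g) \<Rightarrow> real) \<Rightarrow> bool" where
  "transition_kernel p \<longleftrightarrow> (\<forall>w. (\<forall>g. 0 \<le> p g w \<and> p g w \<le> 1) \<and> (\<Sum>g\<in>UNIV. p g w) = 1)"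

definition imitation_kernel ::
  "nat set \<Rightarrow> (nat \<Rightarrow> real) \<Rightarrow> (nat \<Rightarrow> 'g \<Rightarrow> 'g \<Rightarrow> real) \<Rightarrow> 'g \<Rightarrow> (nat \<Rightarrow> 'g) \<Rightarrow> real" where
  "imitation_kernel A \<theta> P g w = (\<Sum>\<^sub>\<infinity>k\<in>A. \<theta> k * P k (w k) g)"

text \<open>Matrix product and the word product P_a = P_(a_n) ... P_(a_1) for a = [a_1,...,a_n].\<close>
definition mmult :: "('g::finite \<Rightarrow> 'g \<Rightarrow> real) \<Rightarrow> ('g \<Rightarrow> 'g \<Rightarrow> real) \<Rightarrow> 'g \<Rightarrow> 'g \<Rightarrow> real" where
  "mmult Q R i j = (\<Sum>l\<in>UNIV. Q i l * R l j)"

fun word_matrix :: "(nat \<Rightarrow> 'g::finite \<Rightarrow> 'g \<Rightarrow> real) \<Rightarrow> nat list \<Rightarrow> 'g \<Rightarrow> 'g \<Rightarrow> real" where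
  "word_matrix P [] = (\<lambda>i j. if i = j then 1 else 0)"
| "word_matrix P (a # as) = mmult (word_matrix P as) (P a)"

definition communicates :: "nat set \<Rightarrow> (nat \<Rightarrow> 'g::finite \<Rightarrow> 'g \<Rightarrow> real) \<Rightarrow> 'g \<Rightarrow> 'g \<Rightarrow> bool" where
  "communicates A P i j \<longleftrightarrow> (\<exists>as. as \<noteq> [] \<and> set as \<subseteq> A \<and> word_matrix P as i j > 0)"

definition intercommunicate :: "nat set \<Rightarrow> (nat \<Rightarrow> 'g::finite \<Rightarrow> 'g \<Rightarrow> real) \<Rightarrow> 'g \<Rightarrow> 'g \<Rightarrow> bool" where
  "intercommunicate A P i j \<longleftrightarrow> i = j \<or> (communicates A P i j \<and> communicates A P j i)"

definition ic_class :: "nat set \<Rightarrow> (nat \<Rightarrow> 'g::finite \<Rightarrow> 'g \<Rightarrow> real) \<Rightarrow> 'g set \<Rightarrow> bool" where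
  "ic_class A P C \<longleftrightarrow> (\<exists>i. C = {j. intercommunicate A P i j})"

definition closed_class :: "nat set \<Rightarrow> (nat \<Rightarrow> 'g::finite \<Rightarrow> 'g \<Rightarrow> real) \<Rightarrow> 'g set \<Rightarrow> bool" where
  "closed_class A P C \<longleftrightarrow> ic_class A P C \<and>
     (\<forall>i\<in>C. \<forall>j. j \<noteq> i \<longrightarrow> communicates A P i j \<longrightarrow> j \<in> C)"

text \<open>Path space G^Z with the product sigma-algebra; coordinate process X_n(x) = x n.\<close>
definition path_space :: "(int \<Rightarrow> 'g) measure" where
  "path_space = PiM UNIV (\<lambda>_. count_space UNIV)"

definition past :: "int \<Rightarrow> (int \<Rightarrow> 'g) \<Rightarrow> nat \<Rightarrow> 'g" where
  "past n x = (\<lambda>k. x (n - int k))"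

definition past_algebra :: "int \<Rightarrow> (int \<Rightarrow> 'g) measure" where
  "past_algebra n = sigma (space path_space)
      {{x \<in> space path_space. x j \<in> B} | j B. j < n}"

text \<open>Compatibility: P(X_n = g | X_{n-1}, X_{n-2}, ...) = p(g | X_{n-1}, ...) a.s.,
  written out via the defining property of conditional probability:
  for every past event B,  P({X_n = g} \<inter> B) = E[1_B p(g | past)], together with
  measurability of the candidate version p(g | past n .) w.r.t. the past sigma-algebra.\<close>
definition compatible :: "('g::finite \<Rightarrow> (nat \<Rightarrow> 'g) \<Rightarrow> real) \<Rightarrow> (int \<Rightarrow> 'g) measure \<Rightarrow> bool" where
  "compatible p \<mu> \<longleftrightarrow> prob_space \<mu> \<and> sets \<mu> = sets path_space \<and>
     (\<forall>n g. (\<lambda>x. p g (past n x)) \<in> borel_measurable (past_algebra n) \<and>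
        (\<forall>B\<in>sets (past_algebra n).
           measure \<mu> ({x\<in>space \<mu>. x n = g} \<inter> B) = (\<integral>x. indicator B x * p g (past n x) \<partial>\<mu>)))"

definition compatible_laws :: "('g::finite \<Rightarrow> (nat \<Rightarrow> 'g) \<Rightarrow> real) \<Rightarrow> (int \<Rightarrow> 'g) measure set" where
  "compatible_laws p = {\<mu>. compatible p \<mu>}"

end

theory Submission
  imports Defs "HOL-Probability.Discrete_Topology"
begin

locale kern =
  fixes p :: "'g::finite \<Rightarrow> (nat \<Rightarrow> 'g) \<Rightarrow> real" and C :: "'g set" and i0 :: 'g
  assumes p_nonneg: "\<And>g w. 0 \<le> p g w"
    and p_sum: "\<And>w. (\<Sum>g\<in>UNIV. p g w) = 1"
    and p_0: "\<And>g w w'. (\<And>k. k \<ge> 1 \<Longrightarrow> w k = w' k) \<Longrightarrow> p g w = p g w'"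
    and p_cont: "\<And>g \<epsilon>. \<epsilon> > 0 \<Longrightarrow> \<exists>L. \<forall>w w'. (\<forall>k. 1 \<le> k \<and> k \<le> L \<longrightarrow> w k = w' k) \<longrightarrow> \<bar>p g w - p g w'\<bar> \<le> \<epsilon>"
    and p_closed: "\<And>g w. g \<notin> C \<Longrightarrow> (\<And>k. k \<ge> 1 \<Longrightarrow> w k \<in> C) \<Longrightarrow> p g w = 0"
    and i0C: "i0 \<in> C"
begin

definition Om :: "nat \<Rightarrow> int \<Rightarrow> (int \<Rightarrow> 'g) set" where
  "Om m T = {x. \<forall>t. (t < - int m \<or> t > T) \<longrightarrow> x t = i0}"

definition W :: "nat \<Rightarrow> int \<Rightarrow> (int \<Rightarrow> 'g) \<Rightarrow> real" where
  "W m T x = (\<Prod>t\<in>{- int m..T}. p (x t) (past t x))"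

definition Em :: "nat \<Rightarrow> int \<Rightarrow> ((int \<Rightarrow> 'g) \<Rightarrow> real) \<Rightarrow> real" where
  "Em m T f = (\<Sum>x\<in>Om m T. W m T x * f x)"

definition dep :: "int \<Rightarrow> ((int \<Rightarrow> 'g) \<Rightarrow> real) \<Rightarrow> bool" where
  "dep T f \<longleftrightarrow> (\<forall>x y. (\<forall>t\<le>T. x t = y t) \<longrightarrow> f x = f y)"

lemma finite_Om: "finite (Om m T)"
proof -
  let ?e = "\<lambda>y t. if t \<in> {- int m..T} then y t else i0"
  have "Om m T \<subseteq> ?e ` (PiE {- int m..T} (\<lambda>_. UNIV))"
  proof
    fix x assume x: "x \<in> Om m T"
    have eq: "x = ?e (restrict x {- int m..T})"
    proof
      fix t show "x t = ?e (restrict x {- int m..T}) t"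
        using x by (cases "t \<in> {- int m..T}") (auto simp: Om_def)
    qed
    have "restrict x {- int m..T} \<in> PiE {- int m..T} (\<lambda>_. UNIV)" by simp
    then show "x \<in> ?e ` (PiE {- int m..T} (\<lambda>_. UNIV))" using eq by (rule rev_image_eqI[of _ _ x ?e])
  qed
  moreover have "finite (PiE {- int m..T} (\<lambda>_. UNIV::'g set))"
    by (intro finite_PiE) auto
  ultimately show ?thesis using finite_subset by blast
qed

lemma W_nonneg: "0 \<le> W m T x"
  unfolding W_def by (intro prod_nonneg) (auto simp: p_nonneg)

lemma Om_step:
  assumes "T \<ge> - int m - 1"
  shows "Om m (T+1) = (\<lambda>(x,g). x(T+1:=g)) ` (Om m T \<times> UNIV)"
proof
  show "Om m (T + 1) \<subseteq> (\<lambda>(x, g). x(T + 1 := g)) ` (Om m T \<times> UNIV)"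
  proof
    fix y assume y: "y \<in> Om m (T+1)"
    have "y = (\<lambda>(x,g). x(T+1:=g)) (y(T+1:=i0), y (T+1))" by auto
    moreover have "y(T+1:=i0) \<in> Om m T" using y by (auto simp: Om_def)
    ultimately show "y \<in> (\<lambda>(x, g). x(T + 1 := g)) ` (Om m T \<times> UNIV)" by blast
  qed
next
  show "(\<lambda>(x, g). x(T + 1 := g)) ` (Om m T \<times> UNIV) \<subseteq> Om m (T + 1)"
    using assms by (auto simp: Om_def)
qed

lemma inj_step: "inj_on (\<lambda>(x,g). x(T+1:=g)) (Om m T \<times> UNIV)"
proof (rule inj_onI, clarify)
  fix x g x' g' assume x: "x \<in> Om m T" and x': "x' \<in> Om m T"
    and eq: "x(T+1:=g) = x'(T+1:=g')"
  have "g = g'" using fun_cong[OF eq, of "T+1"] by simp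
  moreover have "x = x'"
  proof
    fix t show "x t = x' t"
    proof (cases "t = T+1")
      case True then show ?thesis using x x' by (auto simp: Om_def)
    next
      case False then show ?thesis using fun_cong[OF eq, of t] by simp
    qed
  qed
  ultimately show "x = x' \<and> g = g'" by simp
qed

lemma sum_step:
  assumes "T \<ge> - int m - 1"
  shows "(\<Sum>x\<in>Om m (T+1). h x) = (\<Sum>x\<in>Om m T. \<Sum>g\<in>UNIV. h (x(T+1:=g)))"
proof -
  have "(\<Sum>x\<in>Om m (T+1). h x) = (\<Sum>z\<in>Om m T \<times> UNIV. h ((\<lambda>(x,g). x(T+1:=g)) z))"
    unfolding Om_step[OF assms] by (rule sum.reindex[OF inj_step, unfolded comp_def])
  also have "\<dots> = (\<Sum>x\<in>Om m T. \<Sum>g\<in>UNIV. h (x(T+1:=g)))"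
    by (subst sum.cartesian_product) (simp add: case_prod_unfold)
  finally show ?thesis .
qed

lemma past_upd_less: "t < s \<Longrightarrow> past t (x(s:=g)) = past t x"
  by (auto simp: past_def fun_eq_iff)

lemma p_past_upd: "p g (past t (x(t:=a))) = p g (past t x)"
  by (rule p_0) (auto simp: past_def)

lemma W_step:
  assumes "T \<ge> - int m - 1" "x \<in> Om m T"
  shows "W m (T+1) (x(T+1:=g)) = W m T x * p g (past (T+1) x)"
proof -
  have iv: "{- int m..T+1} = insert (T+1) {- int m..T}" using assms(1) by auto
  have "W m (T+1) (x(T+1:=g)) = p g (past (T+1) (x(T+1:=g))) *
      (\<Prod>t\<in>{- int m..T}. p ((x(T+1:=g)) t) (past t (x(T+1:=g))))"
    unfolding W_def iv by (subst prod.insert) auto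
  also have "(\<Prod>t\<in>{- int m..T}. p ((x(T+1:=g)) t) (past t (x(T+1:=g)))) = W m T x"
    unfolding W_def by (intro prod.cong refl) (auto simp: past_upd_less)
  also have "p g (past (T+1) (x(T+1:=g))) = p g (past (T+1) x)" by (rule p_past_upd)
  finally show ?thesis by (simp only: mult.commute)
qed

lemma Em_step:
  assumes "T \<ge> - int m - 1"
  shows "Em m (T+1) f = (\<Sum>x\<in>Om m T. W m T x * (\<Sum>g\<in>UNIV. p g (past (T+1) x) * f (x(T+1:=g))))"
  unfolding Em_def sum_step[OF assms]
  by (intro sum.cong refl) (simp add: W_step[OF assms] sum_distrib_left mult.assoc)

lemma Em_marg:
  assumes "T \<ge> - int m - 1" "\<And>x g. f (x(T+1:=g)) = f x"
  shows "Em m (T+1) f = Em m T f"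
proof -
  have "Em m (T+1) f = (\<Sum>x\<in>Om m T. W m T x * (\<Sum>g\<in>UNIV. p g (past (T+1) x) * f (x(T+1:=g))))"
    by (rule Em_step[OF assms(1)])
  also have "\<dots> = (\<Sum>x\<in>Om m T. W m T x * f x)"
    by (simp add: assms(2) sum_distrib_right[symmetric] p_sum)
  finally show ?thesis unfolding Em_def .
qed

lemma Em_mono_T:
  assumes "dep T f" "T \<ge> - int m - 1" "T \<le> T'"
  shows "Em m T' f = Em m T f"
  using assms(3)
proof (induction T' rule: int_ge_induct)
  case base then show ?case by simp
next
  case (step i)
  have "Em m (i+1) f = Em m i f"
  proof (rule Em_marg)
    show "- int m - 1 \<le> i" using step assms by simp
    fix x :: "int \<Rightarrow> 'g" and g
    have "\<forall>t\<le>T. (x(i+1:=g)) t = x t" using step(1) by auto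
    then show "f (x(i+1:=g)) = f x"
      using assms(1) unfolding dep_def by blast
  qed
  then show ?case using step by simp
qed

lemma Om_base: "Om m (- int m - 1) = {\<lambda>_. i0}"
proof -
  have "\<forall>t. t < - int m \<or> t > - int m - 1" by auto
  thus ?thesis by (auto simp: Om_def fun_eq_iff)
qed

lemma Em_base: "Em m (- int m - 1) f = f (\<lambda>_. i0)"
  by (simp add: Em_def Om_base W_def)

lemma Em_one: "T \<ge> - int m - 1 \<Longrightarrow> Em m T (\<lambda>_. 1) = 1"
  using Em_mono_T[of "- int m - 1" "\<lambda>_. 1" m T] Em_base[of m "\<lambda>_. 1"] by (simp add: dep_def)

lemma dep_mono:
  assumes "dep T f" "T \<le> T'" shows "dep T' f"
  unfolding dep_def
proof (intro allI impI)
  fix x y :: "int \<Rightarrow> 'g" assume "\<forall>t\<le>T'. x t = y t"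
  then have "\<forall>t\<le>T. x t = y t" using assms(2) by auto
  then show "f x = f y" using assms(1) unfolding dep_def by blast
qed

lemma Em_chain:
  assumes f: "dep (n-1) f" and n: "- int m \<le> n" "n \<le> T"
  shows "Em m T (\<lambda>x. f x * (if x n = g then 1 else 0)) = Em m T (\<lambda>x. f x * p g (past n x))"
proof -
  let ?F1 = "\<lambda>x. f x * (if x n = g then 1 else 0)"
  let ?F2 = "\<lambda>x. f x * p g (past n x)"
  have d1: "dep n ?F1"
    unfolding dep_def
  proof (intro allI impI)
    fix x y :: "int \<Rightarrow> 'g" assume a: "\<forall>t\<le>n. x t = y t"
    then have "\<forall>t\<le>n-1. x t = y t" by auto
    then have "f x = f y" using f unfolding dep_def by blast
    moreover have "x n = y n" using a by auto
    ultimately show "?F1 x = ?F1 y" by simp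
  qed
  have d2: "dep (n-1) ?F2"
    unfolding dep_def
  proof (intro allI impI)
    fix x y :: "int \<Rightarrow> 'g" assume a: "\<forall>t\<le>n-1. x t = y t"
    have "f x = f y" using f a unfolding dep_def by blast
    moreover have "p g (past n x) = p g (past n y)"
      by (rule p_0) (use a in \<open>auto simp: past_def\<close>)
    ultimately show "?F2 x = ?F2 y" by simp
  qed
  have "Em m T ?F1 = Em m n ?F1" by (rule Em_mono_T[OF d1]) (use n in auto)
  also have "\<dots> = Em m ((n-1)+1) ?F1" by simp
  also have "\<dots> = (\<Sum>x\<in>Om m (n-1). W m (n-1) x * (\<Sum>g'\<in>UNIV. p g' (past ((n-1)+1) x) * ?F1 (x((n-1)+1:=g'))))"
    by (rule Em_step) (use n in simp)
  also have "\<dots> = (\<Sum>x\<in>Om m (n-1). W m (n-1) x * ?F2 x)"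
  proof (intro sum.cong refl arg_cong2[where f="(*)"])
    fix x :: "int \<Rightarrow> 'g"
    have fx: "f (x(n:=g')) = f x" for g'
    proof -
      have "\<forall>t\<le>n-1. (x(n:=g')) t = x t" by auto
      then show ?thesis using f unfolding dep_def by blast
    qed
    have "(\<Sum>g'\<in>UNIV. p g' (past n x) * ?F1 (x(n:=g'))) = (\<Sum>g'\<in>UNIV. if g' = g then p g (past n x) * f x else 0)"
      by (intro sum.cong refl) (auto simp: fx)
    also have "\<dots> = ?F2 x" by simp
    finally show "(\<Sum>g'\<in>UNIV. p g' (past ((n-1)+1) x) * ?F1 (x((n-1)+1:=g'))) = ?F2 x" by simp
  qed
  also have "\<dots> = Em m (n-1) ?F2" by (simp add: Em_def)
  also have "\<dots> = Em m T ?F2" by (rule Em_mono_T[OF d2, symmetric]) (use n in auto)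
  finally show ?thesis .
qed

lemma Em_diff: "Em m T f - Em m T f' = Em m T (\<lambda>x. f x - f' x)"
  by (simp add: Em_def right_diff_distrib sum_subtractf)

lemma Em_bound:
  assumes T: "T \<ge> - int m - 1" and b: "\<And>x. \<bar>f x - f' x\<bar> \<le> \<epsilon>"
  shows "\<bar>Em m T f - Em m T f'\<bar> \<le> \<epsilon>"
proof -
  have "\<bar>Em m T f - Em m T f'\<bar> = \<bar>Em m T (\<lambda>x. f x - f' x)\<bar>"
    by (simp only: Em_diff)
  also have "\<dots> = \<bar>\<Sum>x\<in>Om m T. W m T x * (f x - f' x)\<bar>"
    by (simp add: Em_def)
  also have "\<dots> \<le> (\<Sum>x\<in>Om m T. \<bar>W m T x * (f x - f' x)\<bar>)" by (rule sum_abs)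
  also have "\<dots> \<le> (\<Sum>x\<in>Om m T. W m T x * \<epsilon>)"
    by (intro sum_mono) (simp add: abs_mult W_nonneg b mult_left_mono)
  also have "\<dots> = \<epsilon> * Em m T (\<lambda>_. 1)" by (simp add: Em_def sum_distrib_left mult.commute)
  also have "\<dots> = \<epsilon>" using Em_one[OF T] by simp
  finally show ?thesis .
qed

lemma support:
  assumes x: "x \<in> Om m T" and Wx: "W m T x \<noteq> 0"
  shows "x t \<in> C"
proof (rule ccontr)
  assume nt: "x t \<notin> C"
  define S where "S = {t. x t \<notin> C}"
  have S_sub: "S \<subseteq> {- int m..T}"
    using x i0C by (force simp: S_def Om_def)
  have finS: "finite S" using S_sub finite_subset by blast
  have "t \<in> S" using nt by (simp add: S_def)
  define t0 where "t0 = Min S"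
  have t0S: "t0 \<in> S" using finS \<open>t \<in> S\<close> Min_in unfolding t0_def by blast
  have t0min: "x s \<in> C" if "s < t0" for s
  proof (rule ccontr)
    assume "x s \<notin> C"
    then have "s \<in> S" by (simp add: S_def)
    then have "t0 \<le> s" unfolding t0_def using finS by (rule Min_le[rotated])
    with that show False by simp
  qed
  have "p (x t0) (past t0 x) = 0"
  proof (rule p_closed)
    show "x t0 \<notin> C" using t0S by (simp add: S_def)
    fix k :: nat assume "k \<ge> 1"
    then show "past t0 x k \<in> C" by (auto simp: past_def intro!: t0min)
  qed
  moreover have "t0 \<in> {- int m..T}" using t0S S_sub by blast
  ultimately have "W m T x = 0" unfolding W_def by (intro prod_zero) auto
  with Wx show False by simp
qed

lemma Em_cong:
  assumes "\<And>x. x \<in> Om m T \<Longrightarrow> (\<forall>t. x t \<in> C) \<Longrightarrow> f x = f' x"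
  shows "Em m T f = Em m T f'"
  unfolding Em_def
proof (intro sum.cong refl)
  fix x assume x: "x \<in> Om m T"
  show "W m T x * f x = W m T x * f' x"
  proof (cases "W m T x = 0")
    case False
    then show ?thesis using assms[OF x] support[OF x False] by simp
  qed simp
qed

lemma Em_cmult: "Em m T (\<lambda>x. c * f x) = c * Em m T f"
  unfolding Em_def sum_distrib_left by (intro sum.cong refl) simp

lemma Em_sum: "Em m T (\<lambda>x. \<Sum>y\<in>Y. h y x) = (\<Sum>y\<in>Y. Em m T (h y))"
proof -
  have "Em m T (\<lambda>x. \<Sum>y\<in>Y. h y x) = (\<Sum>x\<in>Om m T. \<Sum>y\<in>Y. W m T x * h y x)"
    unfolding Em_def by (simp add: sum_distrib_left)
  also have "\<dots> = (\<Sum>y\<in>Y. \<Sum>x\<in>Om m T. W m T x * h y x)" by (rule sum.swap)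
  finally show ?thesis by (simp add: Em_def)
qed

end

lemma diag_conv:
  fixes u :: "nat \<Rightarrow> 'k \<Rightarrow> real"
  assumes K: "countable K" and b: "\<And>m \<kappa>. \<bar>u m \<kappa>\<bar> \<le> 1"
  shows "\<exists>r. strict_mono r \<and> (\<forall>\<kappa>\<in>K. convergent (\<lambda>i. u (r i) \<kappa>))"
proof (cases "K = {}")
  case True then show ?thesis by (intro exI[of _ id]) (auto simp: strict_mono_def)
next
  case False
  define e where "e = from_nat_into K"
  interpret S: subseqs "\<lambda>n s. convergent (\<lambda>i. u (s i) (e n))"
  proof
    fix n and s :: "nat \<Rightarrow> nat" assume "strict_mono s"
    have "bounded (range (\<lambda>i. u (s i) (e n)))"
      unfolding bounded_iff using b by (intro exI[of _ 1]) auto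
    then obtain l r where "strict_mono r" "((\<lambda>i. u (s i) (e n)) \<circ> r) \<longlonglongrightarrow> l"
      using bounded_imp_convergent_subsequence by blast
    then show "\<exists>r'. strict_mono r' \<and> convergent (\<lambda>i. u ((s \<circ> r') i) (e n))"
      by (auto simp: convergent_def o_def)
  qed
  have conv: "convergent (\<lambda>i. u (S.diagseq i) (e n))" for n
  proof -
    have "convergent (\<lambda>i. u ((S.diagseq \<circ> (+) (Suc n)) i) (e n))"
    proof (rule S.diagseq_holds)
      fix r s n assume "strict_mono (r :: nat \<Rightarrow> nat)" "convergent (\<lambda>i. u (s i) (e n))"
      then obtain l where "(\<lambda>i. u (s i) (e n)) \<longlonglongrightarrow> l" by (auto simp: convergent_def)
      hence "((\<lambda>i. u (s i) (e n)) \<circ> r) \<longlonglongrightarrow> l" using \<open>strict_mono r\<close> by (rule LIMSEQ_subseq_LIMSEQ)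
      thus "convergent (\<lambda>i. u ((s \<circ> r) i) (e n))" by (auto simp: convergent_def o_def)
    qed
    then obtain l where "(\<lambda>i. u (S.diagseq (i + Suc n)) (e n)) \<longlonglongrightarrow> l"
      by (auto simp: convergent_def o_def ac_simps)
    hence "(\<lambda>i. u (S.diagseq i) (e n)) \<longlonglongrightarrow> l" by (rule LIMSEQ_offset)
    thus ?thesis by (auto simp: convergent_def)
  qed
  show ?thesis
  proof (intro exI conjI ballI)
    show "strict_mono S.diagseq" by (rule S.subseq_diagseq)
    fix \<kappa> assume "\<kappa> \<in> K"
    then obtain n where "e n = \<kappa>" using from_nat_into_surj[OF K] e_def by blast
    then show "convergent (\<lambda>i. u (S.diagseq i) \<kappa>)" using conv by blast
  qed
qed

context kern
begin

definition ind :: "nat \<Rightarrow> (int \<Rightarrow> 'g) \<Rightarrow> (int \<Rightarrow> 'g) \<Rightarrow> real" where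
  "ind N y x = (if \<forall>t\<in>{- int N..int N}. x t = y t then 1 else 0)"

definition q :: "nat \<Rightarrow> nat \<times> (int \<Rightarrow> 'g) \<Rightarrow> real" where
  "q m \<kappa> = Em m (int (fst \<kappa>)) (ind (fst \<kappa>) (snd \<kappa>))"

definition Keys :: "(nat \<times> (int \<Rightarrow> 'g)) set" where
  "Keys = (\<Union>N. {N} \<times> Om N (int N))"

lemma countable_Keys: "countable Keys"
  unfolding Keys_def using finite_Om by (intro countable_UN) (auto intro: countable_finite)

lemma q_bound: "\<bar>q m \<kappa>\<bar> \<le> 1"
proof -
  have "\<bar>q m \<kappa> - Em m (int (fst \<kappa>)) (\<lambda>_. 0)\<bar> \<le> 1"
    unfolding q_def by (rule Em_bound) (auto simp: ind_def)
  then show ?thesis by (simp add: Em_def)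
qed

lemma q_nonneg: "0 \<le> q m \<kappa>"
  unfolding q_def Em_def by (intro sum_nonneg mult_nonneg_nonneg W_nonneg) (auto simp: ind_def)

definition rr :: "nat \<Rightarrow> nat" where
  "rr = (SOME r. strict_mono r \<and> (\<forall>\<kappa>\<in>Keys. convergent (\<lambda>i. q (r i) \<kappa>)))"

lemma rr: "strict_mono rr" "\<And>\<kappa>. \<kappa> \<in> Keys \<Longrightarrow> convergent (\<lambda>i. q (rr i) \<kappa>)"
proof -
  have "\<exists>r. strict_mono r \<and> (\<forall>\<kappa>\<in>Keys. convergent (\<lambda>i. q (r i) \<kappa>))"
    by (rule diag_conv[OF countable_Keys q_bound])
  then have "strict_mono rr \<and> (\<forall>\<kappa>\<in>Keys. convergent (\<lambda>i. q (rr i) \<kappa>))"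
    unfolding rr_def by (rule someI_ex)
  then show "strict_mono rr" "\<And>\<kappa>. \<kappa> \<in> Keys \<Longrightarrow> convergent (\<lambda>i. q (rr i) \<kappa>)" by auto
qed

definition Q :: "nat \<times> (int \<Rightarrow> 'g) \<Rightarrow> real" where
  "Q \<kappa> = lim (\<lambda>i. q (rr i) \<kappa>)"

lemma Q_lim: "\<kappa> \<in> Keys \<Longrightarrow> (\<lambda>i. q (rr i) \<kappa>) \<longlonglongrightarrow> Q \<kappa>"
  unfolding Q_def using rr(2) by (simp add: convergent_LIMSEQ_iff)

lemma Q_nonneg: "\<kappa> \<in> Keys \<Longrightarrow> 0 \<le> Q \<kappa>"
  using Q_lim by (rule LIMSEQ_le_const) (auto intro: q_nonneg)

definition Lfun :: "nat \<Rightarrow> ((int \<Rightarrow> 'g) \<Rightarrow> real) \<Rightarrow> real" where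
  "Lfun N f = (\<Sum>y\<in>Om N (int N). Q (N, y) * f y)"

definition wdep :: "nat \<Rightarrow> ((int \<Rightarrow> 'g) \<Rightarrow> real) \<Rightarrow> bool" where
  "wdep N f \<longleftrightarrow> (\<forall>x y. (\<forall>t\<in>{- int N..int N}. x t = y t) \<longrightarrow> f x = f y)"

definition rs :: "nat \<Rightarrow> (int \<Rightarrow> 'g) \<Rightarrow> (int \<Rightarrow> 'g)" where
  "rs N x = (\<lambda>t. if t \<in> {- int N..int N} then x t else i0)"

lemma rs_Om: "rs N x \<in> Om N (int N)"
  by (auto simp: rs_def Om_def)

lemma wdep_dep: "wdep N f \<Longrightarrow> dep (int N) f"
  unfolding wdep_def dep_def by auto

lemma wdep_mono:
  assumes "wdep N f" "N \<le> N'" shows "wdep N' f"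
proof -
  have "{- int N..int N} \<subseteq> {- int N'..int N'}" using assms(2) by auto
  then show ?thesis using assms(1) unfolding wdep_def by blast
qed

lemma sum_ind:
  assumes "wdep N f"
  shows "(\<Sum>y\<in>Om N (int N). f y * ind N y x) = f x"
proof -
  have "(\<Sum>y\<in>Om N (int N). f y * ind N y x) = (\<Sum>y\<in>Om N (int N). if y = rs N x then f y else 0)"
  proof (intro sum.cong refl)
    fix y assume y: "y \<in> Om N (int N)"
    have "(\<forall>t\<in>{- int N..int N}. x t = y t) \<longleftrightarrow> y = rs N x"
    proof
      assume a: "\<forall>t\<in>{- int N..int N}. x t = y t"
      show "y = rs N x"
      proof
        fix t show "y t = rs N x t"
          using a y unfolding rs_def Om_def by (cases "t \<in> {- int N..int N}") auto
      qed
    next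
      assume "y = rs N x"
      then show "\<forall>t\<in>{- int N..int N}. x t = y t" by (simp add: rs_def)
    qed
    then show "f y * ind N y x = (if y = rs N x then f y else 0)" by (simp add: ind_def)
  qed
  also have "\<dots> = f (rs N x)" using rs_Om[of N x] finite_Om by (simp add: sum.delta')
  also have "\<dots> = f x"
  proof -
    have "\<forall>t\<in>{- int N..int N}. rs N x t = x t" by (simp add: rs_def)
    then show ?thesis using assms unfolding wdep_def by blast
  qed
  finally show ?thesis .
qed

lemma Em_window:
  assumes "wdep N f"
  shows "Em m (int N) f = (\<Sum>y\<in>Om N (int N). q m (N, y) * f y)"
proof -
  have "Em m (int N) f = Em m (int N) (\<lambda>x. \<Sum>y\<in>Om N (int N). f y * ind N y x)"
    unfolding Em_def by (intro sum.cong refl arg_cong2[where f="(*)"]) (rule sum_ind[OF assms, symmetric])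
  also have "\<dots> = (\<Sum>y\<in>Om N (int N). f y * Em m (int N) (ind N y))"
    by (simp only: Em_sum Em_cmult)
  finally show ?thesis unfolding q_def by (simp only: fst_conv snd_conv mult.commute)
qed

lemma LimE:
  assumes "wdep N f"
  shows "(\<lambda>i. Em (rr i) (int N) f) \<longlonglongrightarrow> Lfun N f"
  unfolding Em_window[OF assms] Lfun_def
  by (intro tendsto_sum tendsto_mult_right Q_lim) (auto simp: Keys_def)

lemma Lfun_mono_N:
  assumes "wdep N f" "N \<le> N'"
  shows "Lfun N' f = Lfun N f"
proof -
  have "Em (rr i) (int N') f = Em (rr i) (int N) f" for i
    by (rule Em_mono_T[OF wdep_dep[OF assms(1)]]) (use assms(2) in auto)
  then have "(\<lambda>i. Em (rr i) (int N) f) \<longlonglongrightarrow> Lfun N' f"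
    using LimE[OF wdep_mono[OF assms]] by simp
  then show ?thesis using LimE[OF assms(1)] LIMSEQ_unique by blast
qed

lemma Lfun_cong_C:
  assumes "wdep N f" "wdep N f'" "\<And>x. (\<forall>t. x t \<in> C) \<Longrightarrow> f x = f' x"
  shows "Lfun N f = Lfun N f'"
proof -
  have "Em (rr i) (int N) f = Em (rr i) (int N) f'" for i
    by (rule Em_cong) (use assms(3) in auto)
  then have "(\<lambda>i. Em (rr i) (int N) f) \<longlonglongrightarrow> Lfun N f'"
    using LimE[OF assms(2)] by simp
  then show ?thesis using LimE[OF assms(1)] LIMSEQ_unique by blast
qed

lemma Lfun_one: "Lfun N (\<lambda>_. 1) = 1"
proof -
  have "(\<lambda>i. Em (rr i) (int N) (\<lambda>_. 1)) \<longlonglongrightarrow> Lfun N (\<lambda>_. 1)"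
    by (rule LimE) (simp add: wdep_def)
  moreover have "Em (rr i) (int N) (\<lambda>_. 1) = 1" for i by (rule Em_one) simp
  ultimately show ?thesis by (simp add: LIMSEQ_const_iff)
qed

end

lemma space_path: "space path_space = UNIV"
  by (auto simp: path_space_def space_PiM)

lemma sets_borel_discrete: "sets (borel :: 'a::countable discrete measure) = sets (count_space UNIV)"
  by (rule sets_borel_eq_count_space)

lemma space_borel_PiM: "space (PiM J (\<lambda>_. borel :: 'a discrete measure)) = PiE J (\<lambda>_. UNIV)"
  by (simp add: space_PiM)

context kern
begin

definition nJ :: "int set \<Rightarrow> nat" where
  "nJ J = Max (insert 0 ((\<lambda>t. nat \<bar>t\<bar>) ` J))"

lemma nJ_sub: "finite J \<Longrightarrow> J \<subseteq> {- int (nJ J)..int (nJ J)}"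
proof
  fix t assume "finite J" "t \<in> J"
  then have "nat \<bar>t\<bar> \<le> nJ J" unfolding nJ_def by (intro Max_ge) auto
  then show "t \<in> {- int (nJ J)..int (nJ J)}" by auto
qed

lemma nJ_le:
  assumes "finite J" "J \<subseteq> {- int N..int N}" shows "nJ J \<le> N"
proof -
  have "nat \<bar>t\<bar> \<le> N" if "t \<in> J" for t
  proof -
    have "- int N \<le> t" "t \<le> int N" using that assms(2) by auto
    then show ?thesis by (simp add: nat_le_iff abs_le_iff)
  qed
  then show ?thesis unfolding nJ_def using assms(1) by (intro Max.boundedI) auto
qed

lemma nJ_mono: "finite H \<Longrightarrow> J \<subseteq> H \<Longrightarrow> nJ J \<le> nJ H"
  using nJ_sub[of H] finite_subset by (intro nJ_le) auto

definition phi :: "int set \<Rightarrow> (int \<Rightarrow> 'g) \<Rightarrow> (int \<Rightarrow> 'g discrete)" where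
  "phi J y = restrict (\<lambda>t. discrete (y t)) J"

lemma phi_space: "phi J y \<in> space (PiM J (\<lambda>_. borel :: 'g discrete measure))"
  by (simp add: phi_def space_PiM)

lemma wdep_phi:
  assumes "J \<subseteq> {- int N..int N}"
  shows "wdep N (\<lambda>y. F (phi J y))"
  unfolding wdep_def
proof (intro allI impI)
  fix x y :: "int \<Rightarrow> 'g" assume a: "\<forall>t\<in>{- int N..int N}. x t = y t"
  have "phi J x = phi J y" unfolding phi_def using a assms by (intro restrict_ext) auto
  then show "F (phi J x) = F (phi J y)" by simp
qed

definition PJ :: "int set \<Rightarrow> (int \<Rightarrow> 'g discrete) measure" where
  "PJ J = distr (point_measure (Om (nJ J) (int (nJ J))) (\<lambda>y. ennreal (Q (nJ J, y))))
      (PiM J (\<lambda>_. borel)) (phi J)"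

lemma phi_meas: "phi J \<in> measurable (point_measure A f) (PiM J (\<lambda>_. borel))"
  using phi_space by simp

lemma sets_PJ: "sets (PJ J) = sets (PiM J (\<lambda>_. borel))"
  by (simp add: PJ_def)

lemma space_PJ: "space (PJ J) = space (PiM J (\<lambda>_. borel))"
  by (simp add: PJ_def)

lemma Lfun_indicator_sum:
  "(\<Sum>y\<in>Om N (int N) \<inter> S. Q (N, y)) = Lfun N (indicator S)"
  unfolding Lfun_def using finite_Om
  by (simp add: sum.inter_restrict indicator_def of_bool_def if_distrib cong: if_cong)

lemma emeasure_PJ:
  assumes J: "finite J" and N: "nJ J \<le> N" and X: "X \<in> sets (PiM J (\<lambda>_. borel))"
  shows "emeasure (PJ J) X = ennreal (Lfun N (\<lambda>y. indicator X (phi J y)))"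
proof -
  let ?N = "nJ J"
  have "emeasure (PJ J) X = emeasure (point_measure (Om ?N (int ?N)) (\<lambda>y. ennreal (Q (?N, y))))
      (phi J -` X \<inter> Om ?N (int ?N))"
    unfolding PJ_def using X by (subst emeasure_distr) (auto simp: space_point_measure phi_space)
  also have "\<dots> = (\<Sum>y\<in>Om ?N (int ?N) \<inter> phi J -` X. ennreal (Q (?N, y)))"
    by (subst emeasure_point_measure_finite) (auto simp: finite_Om Int_commute)
  also have "\<dots> = ennreal (\<Sum>y\<in>Om ?N (int ?N) \<inter> phi J -` X. Q (?N, y))"
    by (rule sum_ennreal) (auto intro!: Q_nonneg simp: Keys_def)
  also have "(\<Sum>y\<in>Om ?N (int ?N) \<inter> phi J -` X. Q (?N, y)) = Lfun ?N (indicator (phi J -` X))"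
    by (rule Lfun_indicator_sum)
  also have "\<dots> = Lfun ?N (\<lambda>y. indicator X (phi J y))"
    by (rule arg_cong[where f="Lfun ?N"]) (auto simp: indicator_def)
  also have "\<dots> = Lfun N (\<lambda>y. indicator X (phi J y))"
    by (rule Lfun_mono_N[symmetric]) (use wdep_phi[OF nJ_sub[OF J]] N in auto)
  finally show ?thesis .
qed

lemma prob_PJ: "finite J \<Longrightarrow> prob_space (PJ J)"
proof (rule prob_spaceI)
  assume J: "finite J"
  have "emeasure (PJ J) (space (PJ J)) = ennreal (Lfun (nJ J) (\<lambda>y. indicator (space (PiM J (\<lambda>_. borel))) (phi J y)))"
    unfolding space_PJ by (rule emeasure_PJ[OF J]) auto
  also have "(\<lambda>y. indicator (space (PiM J (\<lambda>_. borel :: 'g discrete measure))) (phi J y) :: real) = (\<lambda>_. 1)"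
    using phi_space by (auto simp: indicator_def)
  finally show "emeasure (PJ J) (space (PJ J)) = 1" by (simp add: Lfun_one)
qed

lemma PJ_proj:
  assumes JH: "J \<subseteq> H" and H: "finite H"
  shows "PJ J = distr (PJ H) (PiM J (\<lambda>_. borel)) (\<lambda>f. restrict f J)"
proof (rule measure_eqI)
  have J: "finite J" using JH H finite_subset by blast
  have rmeas: "(\<lambda>f. restrict f J) \<in> measurable (PJ H) (PiM J (\<lambda>_. borel))"
    by (subst measurable_cong_sets[OF sets_PJ refl]) (rule measurable_restrict_subset[OF JH])
  show "sets (PJ J) = sets (distr (PJ H) (Pi\<^sub>M J (\<lambda>_. borel)) (\<lambda>f. restrict f J))"
    by (simp add: sets_PJ)
  fix X assume "X \<in> sets (PJ J)"
  then have X: "X \<in> sets (PiM J (\<lambda>_. borel))" by (simp add: sets_PJ)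
  have Y: "(\<lambda>f. restrict f J) -` X \<inter> space (PJ H) \<in> sets (PiM H (\<lambda>_. borel))"
    using measurable_sets[OF rmeas X] by (simp add: sets_PJ)
  have "emeasure (distr (PJ H) (Pi\<^sub>M J (\<lambda>_. borel)) (\<lambda>f. restrict f J)) X
      = emeasure (PJ H) ((\<lambda>f. restrict f J) -` X \<inter> space (PJ H))"
    by (rule emeasure_distr[OF rmeas X])
  also have "\<dots> = ennreal (Lfun (nJ H) (\<lambda>y. indicator ((\<lambda>f. restrict f J) -` X \<inter> space (PJ H)) (phi H y)))"
    by (rule emeasure_PJ[OF H order_refl Y])
  also have "(\<lambda>y. indicator ((\<lambda>f. restrict f J) -` X \<inter> space (PJ H)) (phi H y)) = (\<lambda>y. indicator X (phi J y) :: real)"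
  proof
    fix y
    have "restrict (phi H y) J = phi J y" using JH by (auto simp: phi_def fun_eq_iff)
    then show "indicator ((\<lambda>f. restrict f J) -` X \<inter> space (PJ H)) (phi H y) = (indicator X (phi J y) :: real)"
      using phi_space[of H y] by (simp add: space_PJ indicator_def)
  qed
  also have "ennreal (Lfun (nJ H) (\<lambda>y. indicator X (phi J y))) = emeasure (PJ J) X"
    by (rule emeasure_PJ[OF J nJ_mono[OF H JH] X, symmetric])
  finally show "emeasure (PJ J) X = emeasure (distr (PJ H) (Pi\<^sub>M J (\<lambda>_. borel)) (\<lambda>f. restrict f J)) X" ..
qed

lemma polish_proj: "polish_projective UNIV PJ"
  unfolding polish_projective_def projective_family_def
  using PJ_proj prob_PJ by blast

end

definition dec :: "(int \<Rightarrow> 'g discrete) \<Rightarrow> (int \<Rightarrow> 'g)" where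
  "dec x = (\<lambda>t. of_discrete (x t))"

lemma of_discrete_meas: "of_discrete \<in> measurable (borel :: 'g::countable discrete measure) (count_space UNIV)"
  by (subst measurable_cong_sets[OF sets_borel_eq_count_space refl]) simp

lemma dec_meas: "dec \<in> measurable (PiM UNIV (\<lambda>_. borel :: 'g::countable discrete measure)) path_space"
  unfolding path_space_def dec_def
proof (rule measurable_PiM_single')
  fix t :: int
  have "(\<lambda>x. x t) \<in> measurable (PiM UNIV (\<lambda>_. borel :: 'g discrete measure)) borel"
    by (rule measurable_component_singleton) simp
  then show "(\<lambda>x. of_discrete (x t)) \<in> measurable (PiM UNIV (\<lambda>_. borel :: 'g discrete measure)) (count_space UNIV)"
    by (rule measurable_compose) (rule of_discrete_meas)
qed (auto simp: space_PiM)

lemma disc_iff: "(of_discrete a = b) \<longleftrightarrow> (a = discrete b)"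
proof
  assume "of_discrete a = b"
  then have "discrete (of_discrete a) = discrete b" by simp
  then show "a = discrete b" by (simp add: of_discrete_inverse)
next
  assume "a = discrete b"
  then show "of_discrete a = b" by (simp add: discrete_inverse)
qed

definition cyl :: "nat \<Rightarrow> (int \<Rightarrow> 'g) \<Rightarrow> (int \<Rightarrow> 'g) set" where
  "cyl N y = {x. \<forall>t\<in>{- int N..int N}. x t = y t}"

lemma cyl_sets: "cyl N y \<in> sets path_space"
proof -
  have "cyl N y = prod_emb UNIV (\<lambda>_. count_space UNIV) {- int N..int N} (PiE {- int N..int N} (\<lambda>t. {y t}))"
    by (auto simp: cyl_def prod_emb_iff PiE_iff)
  also have "\<dots> \<in> sets path_space" unfolding path_space_def
    by (rule sets_PiM_I) auto
  finally show ?thesis .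
qed

sublocale kern \<subseteq> PP: polish_projective UNIV PJ
  by (rule polish_proj)

context kern
begin

definition mu :: "(int \<Rightarrow> 'g) measure" where
  "mu = distr PP.lim path_space dec"

lemma dec_meas': "dec \<in> measurable PP.lim path_space"
  by (subst measurable_cong_sets[OF PP.sets_lim refl]) (rule dec_meas)

lemma sets_mu: "sets mu = sets path_space"
  by (simp add: mu_def)

lemma space_mu: "space mu = UNIV"
  by (simp add: mu_def space_path)

lemma prob_mu: "prob_space mu"
  unfolding mu_def by (rule PP.P.prob_space_distr[OF dec_meas'])

lemma Lfun_nonneg: "(\<And>x. 0 \<le> f x) \<Longrightarrow> 0 \<le> Lfun N f"
  unfolding Lfun_def by (intro sum_nonneg mult_nonneg_nonneg Q_nonneg) (auto simp: Keys_def)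

lemma Lfun_sum_cmult:
  "Lfun N (\<lambda>x. \<Sum>y\<in>Y. c y * h y x) = (\<Sum>y\<in>Y. c y * Lfun N (h y))"
proof -
  have "Lfun N (\<lambda>x. \<Sum>y\<in>Y. c y * h y x) = (\<Sum>x\<in>Om N (int N). \<Sum>y\<in>Y. c y * (Q (N, x) * h y x))"
    unfolding Lfun_def by (simp add: sum_distrib_left mult.left_commute)
  also have "\<dots> = (\<Sum>y\<in>Y. \<Sum>x\<in>Om N (int N). c y * (Q (N, x) * h y x))" by (rule sum.swap)
  also have "\<dots> = (\<Sum>y\<in>Y. c y * Lfun N (h y))"
    unfolding Lfun_def by (simp add: sum_distrib_left)
  finally show ?thesis .
qed

lemma measure_cyl:
  assumes y: "y \<in> Om N (int N)"
  shows "measure mu (cyl N y) = Lfun N (ind N y)"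
proof -
  let ?W = "{- int N..int N}"
  have W: "finite ?W" by simp
  have sing: "{phi ?W y} \<in> sets (PiM ?W (\<lambda>_. borel :: 'g discrete measure))"
  proof -
    have "{phi ?W y} = PiE ?W (\<lambda>t. {discrete (y t)})"
      by (auto simp: phi_def PiE_iff fun_eq_iff extensional_def)
    also have "\<dots> \<in> sets (PiM ?W (\<lambda>_. borel :: 'g discrete measure))"
      by (rule sets_PiM_I_finite) auto
    finally show ?thesis .
  qed
  have pre: "dec -` cyl N y \<inter> space PP.lim = prod_emb UNIV (\<lambda>_. borel) ?W {phi ?W y}"
  proof -
    have "restrict x ?W = phi ?W y \<longleftrightarrow> (\<forall>t\<in>?W. of_discrete (x t) = y t)" for x :: "int \<Rightarrow> 'g discrete"
      by (auto simp: phi_def fun_eq_iff restrict_def disc_iff split: if_splits)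
    then show ?thesis
      by (auto simp: cyl_def dec_def prod_emb_iff space_PiM)
  qed
  have "measure mu (cyl N y) = measure PP.lim (dec -` cyl N y \<inter> space PP.lim)"
    unfolding mu_def by (rule measure_distr[OF dec_meas' cyl_sets])
  also have "\<dots> = measure (PJ ?W) {phi ?W y}"
    unfolding pre by (rule PP.measure_lim_emb) (auto intro: sing)
  also have "\<dots> = enn2real (ennreal (Lfun N (\<lambda>y'. indicator {phi ?W y} (phi ?W y'))))"
    unfolding measure_def by (subst emeasure_PJ[OF W nJ_le[OF W order_refl] sing]) rule
  also have "\<dots> = Lfun N (\<lambda>y'. indicator {phi ?W y} (phi ?W y'))"
    by (intro enn2real_ennreal Lfun_nonneg) auto
  also have "(\<lambda>y'. indicator {phi ?W y} (phi ?W y')) = ind N y"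
  proof
    fix y'
    have "phi ?W y' = phi ?W y \<longleftrightarrow> (\<forall>t\<in>?W. y' t = y t)"
      by (auto simp: phi_def fun_eq_iff restrict_def discrete_inject split: if_splits)
    then show "indicator {phi ?W y} (phi ?W y') = ind N y y'"
      by (auto simp: ind_def indicator_def)
  qed
  finally show ?thesis .
qed

lemma ind_cyl: "ind N y = indicator (cyl N y)"
  by (auto simp: ind_def cyl_def indicator_def fun_eq_iff)

lemma wdep_expand: "wdep N f \<Longrightarrow> f = (\<lambda>x. \<Sum>y\<in>Om N (int N). f y * indicator (cyl N y) x)"
  using sum_ind[of N f] by (auto simp: ind_cyl fun_eq_iff)

lemma wdep_meas: "wdep N f \<Longrightarrow> f \<in> borel_measurable path_space"
  by (subst wdep_expand) (auto intro!: borel_measurable_sum borel_measurable_times borel_measurable_indicator cyl_sets)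

lemma integral_wdep:
  assumes f: "wdep N f"
  shows "(\<integral>x. f x \<partial>mu) = Lfun N f"
proof -
  interpret M: prob_space mu by (rule prob_mu)
  have "(\<integral>x. f x \<partial>mu) = (\<integral>x. (\<Sum>y\<in>Om N (int N). f y * indicator (cyl N y) x) \<partial>mu)"
    by (subst wdep_expand[OF f]) rule
  also have "\<dots> = (\<Sum>y\<in>Om N (int N). \<integral>x. f y * indicator (cyl N y) x \<partial>mu)"
  proof (rule Bochner_Integration.integral_sum)
    fix y
    have "integrable mu (indicator (cyl N y) :: _ \<Rightarrow> real)"
      by (rule integrable_real_indicator) (auto simp: sets_mu cyl_sets M.emeasure_finite less_top[symmetric])
    then show "integrable mu (\<lambda>x. f y * indicator (cyl N y) x)"
      by (rule integrable_mult_right)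
  qed
  also have "\<dots> = (\<Sum>y\<in>Om N (int N). f y * measure mu (cyl N y))"
    by (simp add: space_mu)
  also have "\<dots> = (\<Sum>y\<in>Om N (int N). f y * Lfun N (ind N y))"
    by (intro sum.cong refl) (simp add: measure_cyl)
  also have "\<dots> = Lfun N (\<lambda>x. \<Sum>y\<in>Om N (int N). f y * ind N y x)"
    by (rule Lfun_sum_cmult[symmetric])
  also have "(\<lambda>x. \<Sum>y\<in>Om N (int N). f y * ind N y x) = f"
    using sum_ind[OF f] by auto
  finally show ?thesis .
qed

end

context kern
begin

definition cdep :: "int set \<Rightarrow> ((int \<Rightarrow> 'g) \<Rightarrow> real) \<Rightarrow> bool" where
  "cdep J f \<longleftrightarrow> (\<forall>x y. (\<forall>t\<in>J. x t = y t) \<longrightarrow> f x = f y)"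

lemma cdep_wdep: "cdep J f \<Longrightarrow> J \<subseteq> {- int N..int N} \<Longrightarrow> wdep N f"
  unfolding cdep_def wdep_def by blast

lemma cdep_dep:
  assumes "cdep J f" "J \<subseteq> {..<n}" shows "dep (n-1) f"
  unfolding dep_def
proof (intro allI impI)
  fix x y :: "int \<Rightarrow> 'g" assume a: "\<forall>t\<le>n-1. x t = y t"
  have "\<forall>t\<in>J. x t = y t"
  proof
    fix t assume "t \<in> J"
    then have "t \<le> n - 1" using assms(2) by auto
    then show "x t = y t" using a by blast
  qed
  then show "f x = f y" using assms(1) unfolding cdep_def by blast
qed

lemma cdep_mono: "cdep J f \<Longrightarrow> J \<subseteq> J' \<Longrightarrow> cdep J' f"
  unfolding cdep_def by blast

lemma cdep_mult: "cdep J f \<Longrightarrow> cdep J f' \<Longrightarrow> cdep J (\<lambda>x. f x * f' x)"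
  unfolding cdep_def by metis

definition R :: "int set \<Rightarrow> (int \<Rightarrow> 'g) set" where
  "R J = {z. \<forall>t. t \<notin> J \<longrightarrow> z t = i0}"

lemma finite_R: "finite J \<Longrightarrow> finite (R J)"
proof -
  assume J: "finite J"
  let ?e = "\<lambda>y t. if t \<in> J then y t else i0"
  have "R J \<subseteq> ?e ` (PiE J (\<lambda>_. UNIV))"
  proof
    fix x assume x: "x \<in> R J"
    have eq: "x = ?e (restrict x J)"
    proof
      fix t show "x t = ?e (restrict x J) t"
        using x by (cases "t \<in> J") (auto simp: R_def)
    qed
    have "restrict x J \<in> PiE J (\<lambda>_. UNIV)" by simp
    then show "x \<in> ?e ` (PiE J (\<lambda>_. UNIV))" using eq by (rule rev_image_eqI[of _ _ x ?e])
  qed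
  moreover have "finite (PiE J (\<lambda>_. UNIV::'g set))"
    using J by (intro finite_PiE) auto
  ultimately show ?thesis using finite_subset by blast
qed

definition cylJ :: "int set \<Rightarrow> (int \<Rightarrow> 'g) \<Rightarrow> (int \<Rightarrow> 'g) set" where
  "cylJ J z = {x. \<forall>t\<in>J. x t = z t}"

lemma cdep_expand:
  assumes J: "finite J" and f: "cdep J f"
  shows "f x = (\<Sum>z\<in>R J. f z * indicator (cylJ J z) x)"
proof -
  define r where "r = (\<lambda>t. if t \<in> J then x t else i0)"
  have rR: "r \<in> R J" by (auto simp: r_def R_def)
  have "(\<Sum>z\<in>R J. f z * indicator (cylJ J z) x) = (\<Sum>z\<in>R J. if z = r then f z else 0)"
  proof (intro sum.cong refl)
    fix z assume z: "z \<in> R J"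
    have "(\<forall>t\<in>J. x t = z t) \<longleftrightarrow> z = r"
    proof
      assume a: "\<forall>t\<in>J. x t = z t"
      show "z = r"
      proof
        fix t show "z t = r t"
          using a z unfolding r_def R_def by (cases "t \<in> J") auto
      qed
    next
      assume "z = r"
      then show "\<forall>t\<in>J. x t = z t" by (simp add: r_def)
    qed
    then show "f z * indicator (cylJ J z) x = (if z = r then f z else 0)"
      by (simp add: cylJ_def indicator_def)
  qed
  also have "\<dots> = f r" using rR finite_R[OF J] by (simp add: sum.delta')
  also have "\<dots> = f x"
  proof -
    have "\<forall>t\<in>J. r t = x t" by (simp add: r_def)
    then show ?thesis using f unfolding cdep_def by blast
  qed
  finally show ?thesis by simp
qed

lemma cdep_meas:
  assumes J: "finite J" and f: "cdep J f" and cyl: "\<And>z. cylJ J z \<in> sets M"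
  shows "f \<in> borel_measurable M"
proof -
  have "f = (\<lambda>x. \<Sum>z\<in>R J. f z * indicator (cylJ J z) x)"
    by (rule ext) (rule cdep_expand[OF J f])
  also have "\<dots> \<in> borel_measurable M"
    by (intro borel_measurable_sum borel_measurable_times borel_measurable_const
        borel_measurable_indicator cyl)
  finally show ?thesis .
qed

lemma space_past: "space (past_algebra n) = UNIV"
  unfolding past_algebra_def space_path by (rule space_measure_of) auto

lemma sets_past: "sets (past_algebra n) = sigma_sets UNIV {{x \<in> UNIV. x j \<in> B} | j B. j < n}"
  unfolding past_algebra_def space_path by (rule sets_measure_of) auto

lemma gen_past: "j < n \<Longrightarrow> {x. x j \<in> B} \<in> sets (past_algebra n)"
  unfolding sets_past by (rule sigma_sets.Basic) auto

lemma cylJ_past: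
  assumes J: "finite J" "J \<subseteq> {..<n}"
  shows "cylJ J z \<in> sets (past_algebra n)"
proof (cases "J = {}")
  case True
  then have "cylJ J z = space (past_algebra n)" by (simp add: cylJ_def space_past)
  then show ?thesis by simp
next
  case False
  have "cylJ J z = (\<Inter>t\<in>J. {x. x t \<in> {z t}})" by (auto simp: cylJ_def)
  also have "\<dots> \<in> sets (past_algebra n)"
    using J False by (intro sets.finite_INT gen_past) auto
  finally show ?thesis .
qed

lemma cylJ_path: "finite J \<Longrightarrow> cylJ J z \<in> sets path_space"
proof -
  assume J: "finite J"
  have "cylJ J z = prod_emb UNIV (\<lambda>_. count_space UNIV) J (PiE J (\<lambda>t. {z t}))"
    by (auto simp: cylJ_def prod_emb_iff PiE_iff)
  also have "\<dots> \<in> sets path_space" unfolding path_space_def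
    using J by (intro sets_PiM_I) auto
  finally show ?thesis .
qed

definition trunc :: "int \<Rightarrow> nat \<Rightarrow> (int \<Rightarrow> 'g) \<Rightarrow> (int \<Rightarrow> 'g)" where
  "trunc n L x = (\<lambda>t. if n - int L \<le> t \<and> t < n then x t else i0)"

definition hL :: "int \<Rightarrow> 'g \<Rightarrow> nat \<Rightarrow> (int \<Rightarrow> 'g) \<Rightarrow> real" where
  "hL n g L x = p g (past n (trunc n L x))"

lemma cdep_hL: "cdep {n - int L..<n} (hL n g L)"
  unfolding cdep_def
proof (intro allI impI)
  fix x y :: "int \<Rightarrow> 'g" assume "\<forall>t\<in>{n - int L..<n}. x t = y t"
  then have "trunc n L x = trunc n L y" by (auto simp: trunc_def fun_eq_iff)
  then show "hL n g L x = hL n g L y" by (simp add: hL_def)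
qed

lemma hL_close:
  assumes e: "\<epsilon> > 0"
  shows "\<exists>L0. \<forall>L\<ge>L0. \<forall>x. \<bar>p g (past n x) - hL n g L x\<bar> \<le> \<epsilon>"
proof -
  obtain L0 where L0: "\<forall>w w'. (\<forall>k. 1 \<le> k \<and> k \<le> L0 \<longrightarrow> w k = w' k) \<longrightarrow> \<bar>p g w - p g w'\<bar> \<le> \<epsilon>"
    using p_cont[OF e] by blast
  have "\<bar>p g (past n x) - hL n g L x\<bar> \<le> \<epsilon>" if "L \<ge> L0" for L x
  proof -
    have "\<forall>k. 1 \<le> k \<and> k \<le> L0 \<longrightarrow> past n x k = past n (trunc n L x) k"
      using that by (auto simp: past_def trunc_def)
    then show ?thesis using L0 unfolding hL_def by blast
  qed
  then show ?thesis by blast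
qed

lemma hL_lim: "(\<lambda>L. hL n g L x) \<longlonglongrightarrow> p g (past n x)"
proof (rule LIMSEQ_I)
  fix r :: real assume r: "r > 0"
  obtain L0 where L0: "\<forall>L\<ge>L0. \<forall>x. \<bar>p g (past n x) - hL n g L x\<bar> \<le> r / 2"
    using hL_close[of "r/2" g n] r by (metis half_gt_zero)
  have "norm (hL n g L x - p g (past n x)) < r" if "L \<ge> L0" for L
  proof -
    have "\<bar>p g (past n x) - hL n g L x\<bar> \<le> r / 2" using L0 that by blast
    then show ?thesis using r by (simp add: abs_minus_commute)
  qed
  then show "\<exists>no. \<forall>L\<ge>no. norm (hL n g L x - p g (past n x)) < r" by blast
qed

lemma meas_h:
  assumes "\<And>L. hL n g L \<in> borel_measurable M"
  shows "(\<lambda>x. p g (past n x)) \<in> borel_measurable M"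
  by (rule borel_measurable_LIMSEQ_real[OF hL_lim assms])

lemma meas_past: "(\<lambda>x. p g (past n x)) \<in> borel_measurable (past_algebra n)"
  by (rule meas_h, rule cdep_meas[OF _ cdep_hL cylJ_past]) auto

lemma meas_path: "(\<lambda>x. p g (past n x)) \<in> borel_measurable path_space"
  by (rule meas_h, rule cdep_meas[OF _ cdep_hL cylJ_path]) auto

end

context kern
begin

lemma p_le1: "p g w \<le> 1"
proof -
  have "p g w \<le> (\<Sum>g'\<in>UNIV. p g' w)"
    by (rule member_le_sum) (auto simp: p_nonneg)
  then show ?thesis by (simp add: p_sum)
qed

lemma int_abs_le:
  fixes u :: "(int \<Rightarrow> 'g) \<Rightarrow> real"
  assumes u: "integrable mu u" and b: "\<And>x. \<bar>u x\<bar> \<le> c"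
  shows "\<bar>\<integral>x. u x \<partial>mu\<bar> \<le> c"
proof -
  interpret M: prob_space mu by (rule prob_mu)
  have "(\<integral>x. u x \<partial>mu) \<le> (\<integral>x. c \<partial>mu)"
    by (rule Bochner_Integration.integral_mono[OF u]) (auto simp: b abs_le_D1)
  moreover have "(\<integral>x. - c \<partial>mu) \<le> (\<integral>x. u x \<partial>mu)"
  proof (rule Bochner_Integration.integral_mono[OF _ u])
    fix x show "- c \<le> u x" using b[of x] by linarith
  qed simp
  ultimately show ?thesis by (simp add: abs_le_iff M.prob_space)
qed

definition csetP :: "int \<Rightarrow> (int \<Rightarrow> 'g) set set" where
  "csetP n = {{x. \<forall>t\<in>S. x t \<in> A t} | S A. finite S \<and> S \<subseteq> {..<n}}"

lemma cset_path:
  assumes "finite S"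
  shows "{x. \<forall>t\<in>S. x t \<in> A t} \<in> sets path_space"
proof -
  have "{x. \<forall>t\<in>S. x t \<in> A t} = prod_emb UNIV (\<lambda>_. count_space UNIV) S (PiE S A)"
    by (auto simp: prod_emb_iff PiE_iff)
  also have "\<dots> \<in> sets path_space" unfolding path_space_def
    using assms by (intro sets_PiM_I) auto
  finally show ?thesis .
qed

lemma cyl_identity:
  fixes S :: "int set" and A :: "int \<Rightarrow> 'g set" and n :: int and g :: 'g
  assumes S: "finite S" "S \<subseteq> {..<n}"
  defines "B \<equiv> {x. \<forall>t\<in>S. x t \<in> A t}"
  shows "measure mu ({x. x n = g} \<inter> B) = (\<integral>x. indicator B x * p g (past n x) \<partial>mu)"
proof -
  interpret M: prob_space mu by (rule prob_mu)
  let ?fB = "indicator B :: (int \<Rightarrow> 'g) \<Rightarrow> real"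
  let ?h = "\<lambda>x. p g (past n x)"
  let ?F1 = "\<lambda>x. ?fB x * (if x n = g then 1 else 0)"
  have Bsets: "B \<in> sets mu" unfolding B_def sets_mu by (rule cset_path[OF S(1)])
  have cdB: "cdep S ?fB" unfolding cdep_def B_def indicator_def by auto
  have LHS: "measure mu ({x. x n = g} \<inter> B) = (\<integral>x. ?F1 x \<partial>mu)"
  proof -
    have "(\<integral>x. ?F1 x \<partial>mu) = (\<integral>x. indicator ({x. x n = g} \<inter> B) x \<partial>mu)"
      by (rule Bochner_Integration.integral_cong) (auto simp: indicator_def)
    also have "\<dots> = measure mu ({x. x n = g} \<inter> B)" by (simp add: space_mu)
    finally show ?thesis by simp
  qed
  have int_fBh: "integrable mu (\<lambda>x. ?fB x * ?h x)"
  proof (rule M.integrable_const_bound[where B=1])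
    show "AE x in mu. norm (?fB x * ?h x) \<le> 1"
      by (auto simp: indicator_def p_nonneg p_le1)
    show "(\<lambda>x. ?fB x * ?h x) \<in> borel_measurable mu"
      unfolding measurable_cong_sets[OF sets_mu refl]
      by (intro borel_measurable_times borel_measurable_indicator meas_path) (use Bsets sets_mu in auto)
  qed
  have key: "\<bar>(\<integral>x. ?F1 x \<partial>mu) - (\<integral>x. ?fB x * ?h x \<partial>mu)\<bar> \<le> 2 * \<epsilon>" if e: "\<epsilon> > 0" for \<epsilon>
  proof -
    obtain L where L: "\<forall>x. \<bar>p g (past n x) - hL n g L x\<bar> \<le> \<epsilon>"
      using hL_close[OF e, of g n] by blast
    let ?F2 = "\<lambda>x. ?fB x * hL n g L x"
    define J where "J = S \<union> {n} \<union> {n - int L..<n}"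
    have J: "finite J" using S by (simp add: J_def)
    define N where "N = nJ J"
    have JN: "J \<subseteq> {- int N..int N}" unfolding N_def by (rule nJ_sub[OF J])
    have nN: "n \<le> int N" using JN by (auto simp: J_def)
    have cdE: "cdep {n} (\<lambda>x. if x n = g then 1 else 0)" unfolding cdep_def by auto
    have w1: "wdep N ?F1"
      by (rule cdep_wdep[OF cdep_mult[OF cdep_mono[OF cdB] cdep_mono[OF cdE]] JN]) (auto simp: J_def)
    have w2: "wdep N ?F2"
      by (rule cdep_wdep[OF cdep_mult[OF cdep_mono[OF cdB] cdep_mono[OF cdep_hL]] JN]) (auto simp: J_def)
    have dB: "dep (n-1) ?fB" by (rule cdep_dep[OF cdB S(2)])
    have ev: "\<bar>Em (rr i) (int N) ?F1 - Em (rr i) (int N) ?F2\<bar> \<le> \<epsilon>" if i: "i \<ge> nat (- n)" for i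
    proof -
      have "i \<le> rr i" using rr(1) by (rule seq_suble)
      then have m: "- int (rr i) \<le> n" using i by linarith
      have "Em (rr i) (int N) ?F1 = Em (rr i) (int N) (\<lambda>x. ?fB x * ?h x)"
        by (rule Em_chain[OF dB m nN])
      also have "\<bar>\<dots> - Em (rr i) (int N) ?F2\<bar> \<le> \<epsilon>"
      proof (rule Em_bound)
        show "- int (rr i) - 1 \<le> int N" by simp
        fix x
        have "\<bar>?fB x * ?h x - ?F2 x\<bar> = ?fB x * \<bar>?h x - hL n g L x\<bar>"
          by (simp add: indicator_def)
        also have "\<dots> \<le> \<epsilon>" using L e by (simp add: indicator_def)
        finally show "\<bar>?fB x * ?h x - ?F2 x\<bar> \<le> \<epsilon>" .
      qed
      finally show ?thesis .
    qed
    have lim1: "(\<lambda>i. \<bar>Em (rr i) (int N) ?F1 - Em (rr i) (int N) ?F2\<bar>) \<longlonglongrightarrow> \<bar>Lfun N ?F1 - Lfun N ?F2\<bar>"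
      by (intro tendsto_rabs tendsto_diff LimE w1 w2)
    have b1: "\<bar>Lfun N ?F1 - Lfun N ?F2\<bar> \<le> \<epsilon>"
      by (rule LIMSEQ_le_const2[OF lim1]) (use ev in blast)
    have int_F2: "integrable mu ?F2"
    proof (rule M.integrable_const_bound[where B=1])
      show "AE x in mu. norm (?F2 x) \<le> 1"
        by (auto simp: indicator_def hL_def p_nonneg p_le1)
      show "?F2 \<in> borel_measurable mu"
        using wdep_meas[OF w2] by (simp add: measurable_cong_sets[OF sets_mu refl])
    qed
    have b2: "\<bar>(\<integral>x. ?F2 x \<partial>mu) - (\<integral>x. ?fB x * ?h x \<partial>mu)\<bar> \<le> \<epsilon>"
    proof -
      have "(\<integral>x. ?F2 x \<partial>mu) - (\<integral>x. ?fB x * ?h x \<partial>mu) = (\<integral>x. ?F2 x - ?fB x * ?h x \<partial>mu)"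
        by (rule Bochner_Integration.integral_diff[OF int_F2 int_fBh, symmetric])
      also have "\<bar>\<dots>\<bar> \<le> \<epsilon>"
      proof (rule int_abs_le)
        show "integrable mu (\<lambda>x. ?F2 x - ?fB x * ?h x)" using int_F2 int_fBh by simp
        fix x
        have "\<bar>?F2 x - ?fB x * ?h x\<bar> = ?fB x * \<bar>?h x - hL n g L x\<bar>"
          by (simp add: indicator_def abs_minus_commute)
        also have "\<dots> \<le> \<epsilon>" using L e by (simp add: indicator_def)
        finally show "\<bar>?F2 x - ?fB x * ?h x\<bar> \<le> \<epsilon>" .
      qed
      finally show ?thesis .
    qed
    have "(\<integral>x. ?F1 x \<partial>mu) = Lfun N ?F1" by (rule integral_wdep[OF w1])
    moreover have "(\<integral>x. ?F2 x \<partial>mu) = Lfun N ?F2" by (rule integral_wdep[OF w2])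
    ultimately show ?thesis using b1 b2 by linarith
  qed
  have "(\<integral>x. ?F1 x \<partial>mu) = (\<integral>x. ?fB x * ?h x \<partial>mu)"
  proof (rule ccontr)
    let ?d = "\<bar>(\<integral>x. ?F1 x \<partial>mu) - (\<integral>x. ?fB x * ?h x \<partial>mu)\<bar>"
    assume "(\<integral>x. ?F1 x \<partial>mu) \<noteq> (\<integral>x. ?fB x * ?h x \<partial>mu)"
    then have "?d > 0" by simp
    then have "?d \<le> 2 * (?d / 4)" using key[of "?d / 4"] by simp
    with \<open>?d > 0\<close> show False by simp
  qed
  then show ?thesis using LHS by simp
qed

end

context kern
begin

lemma csetP_Int_stable: "Int_stable (csetP n)"
  unfolding Int_stable_def
proof (intro ballI)
  fix a b assume "a \<in> csetP n" "b \<in> csetP n"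
  then obtain S A S' A' where a: "a = {x. \<forall>t\<in>S. x t \<in> A t}" "finite S" "S \<subseteq> {..<n}"
    and b: "b = {x. \<forall>t\<in>S'. x t \<in> A' t}" "finite S'" "S' \<subseteq> {..<n}"
    unfolding csetP_def by blast
  define A'' where "A'' t = (if t \<in> S then A t else UNIV) \<inter> (if t \<in> S' then A' t else UNIV)" for t
  have "a \<inter> b = {x. \<forall>t\<in>S \<union> S'. x t \<in> A'' t}"
    unfolding a b A''_def by auto
  then show "a \<inter> b \<in> csetP n" unfolding csetP_def
    by (intro CollectI exI[of _ "S \<union> S'"] exI[of _ A'']) (use a b in auto)
qed

lemma past_sub_csetP: "sets (past_algebra n) \<subseteq> sigma_sets UNIV (csetP n)"
  unfolding sets_past
proof (rule sigma_sets_mono')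
  show "{{x \<in> UNIV. x j \<in> B} | j B. j < n} \<subseteq> csetP n"
  proof
    fix X :: "(int \<Rightarrow> 'g) set" assume "X \<in> {{x \<in> UNIV. x j \<in> B} | j B. j < n}"
    then obtain j B where X: "X = {x. x j \<in> B}" "j < n" by auto
    have "X = {x. \<forall>t\<in>{j}. x t \<in> (\<lambda>_. B) t}" using X by auto
    then show "X \<in> csetP n" unfolding csetP_def
      by (intro CollectI exI[of _ "{j}"] exI[of _ "\<lambda>_::int. B"]) (use X in auto)
  qed
qed

lemma csetP_sets: "sigma_sets UNIV (csetP n) \<subseteq> sets mu"
proof -
  have "csetP n \<subseteq> sets mu"
    unfolding csetP_def sets_mu using cset_path by blast
  then show ?thesis using sets.sigma_sets_subset[of "csetP n" mu] by (simp add: space_mu)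
qed

lemma compat_sets:
  assumes B: "B \<in> sets (past_algebra n)"
  shows "measure mu ({x\<in>space mu. x n = g} \<inter> B) = (\<integral>x. indicator B x * p g (past n x) \<partial>mu)"
proof -
  interpret M: prob_space mu by (rule prob_mu)
  let ?E = "{x. x n = g}"
  let ?h = "\<lambda>x. p g (past n x)"
  have Esets: "?E \<in> sets mu"
    using cset_path[of "{n}" "\<lambda>_. {g}"] by (simp add: sets_mu)
  have hmeas: "?h \<in> borel_measurable mu"
    using meas_path by (simp add: measurable_cong_sets[OF sets_mu refl])
  define \<nu>1 where "\<nu>1 = density mu (indicator ?E)"
  define \<nu>2 where "\<nu>2 = density mu (\<lambda>x. ennreal (?h x))"
  have intB: "integrable mu (\<lambda>x. indicator D x * ?h x)" if D: "D \<in> sets mu" for D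
  proof (rule M.integrable_const_bound[where B=1])
    show "AE x in mu. norm (indicator D x * ?h x) \<le> 1"
      by (auto simp: indicator_def p_nonneg p_le1)
    show "(\<lambda>x. indicator D x * ?h x) \<in> borel_measurable mu"
      by (intro borel_measurable_times borel_measurable_indicator hmeas D)
  qed
  have e1: "emeasure \<nu>1 D = emeasure mu (?E \<inter> D)" if D: "D \<in> sets mu" for D
  proof -
    have "emeasure \<nu>1 D = (\<integral>\<^sup>+x. indicator ?E x * indicator D x \<partial>mu)"
      unfolding \<nu>1_def by (rule emeasure_density) (auto intro: Esets D borel_measurable_indicator)
    also have "\<dots> = (\<integral>\<^sup>+x. indicator (?E \<inter> D) x \<partial>mu)"
      by (simp add: indicator_inter_arith)
    also have "\<dots> = emeasure mu (?E \<inter> D)"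
      using Esets D by (intro nn_integral_indicator) auto
    finally show ?thesis .
  qed
  have e2: "emeasure \<nu>2 D = ennreal (\<integral>x. indicator D x * ?h x \<partial>mu)" if D: "D \<in> sets mu" for D
  proof -
    have "emeasure \<nu>2 D = (\<integral>\<^sup>+x. ennreal (?h x) * indicator D x \<partial>mu)"
      unfolding \<nu>2_def by (rule emeasure_density) (auto intro: measurable_compose[OF hmeas] D)
    also have "\<dots> = (\<integral>\<^sup>+x. ennreal (indicator D x * ?h x) \<partial>mu)"
      by (intro nn_integral_cong) (auto simp: indicator_def)
    also have "\<dots> = ennreal (\<integral>x. indicator D x * ?h x \<partial>mu)"
      by (rule nn_integral_eq_integral[OF intB[OF D]]) (auto simp: p_nonneg)
    finally show ?thesis .
  qed
  have sp1: "space \<nu>1 = UNIV" "sets \<nu>1 = sets mu" by (simp_all add: \<nu>1_def space_mu)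
  have sp2: "space \<nu>2 = UNIV" "sets \<nu>2 = sets mu" by (simp_all add: \<nu>2_def space_mu)
  have fin1: "emeasure \<nu>1 D \<noteq> \<infinity>" if "D \<in> sets mu" for D
    using e1[OF that] M.emeasure_finite by simp
  have fin2: "emeasure \<nu>2 D \<noteq> \<infinity>" if "D \<in> sets mu" for D
    using e2[OF that] by simp
  have basic_eq: "emeasure \<nu>1 D = emeasure \<nu>2 D" if D: "D \<in> csetP n" for D
  proof -
    obtain S A where SA: "D = {x. \<forall>t\<in>S. x t \<in> A t}" "finite S" "S \<subseteq> {..<n}"
      using D unfolding csetP_def by blast
    have Ds: "D \<in> sets mu" using cset_path[OF SA(2)] SA(1) by (simp add: sets_mu)
    have "measure mu (?E \<inter> D) = (\<integral>x. indicator D x * ?h x \<partial>mu)"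
      unfolding SA(1) by (rule cyl_identity[OF SA(2,3)])
    then show ?thesis
      using e1[OF Ds] e2[OF Ds] M.emeasure_eq_measure by simp
  qed
  have UNIVc: "UNIV \<in> csetP n"
  proof -
    have "UNIV = {x::int\<Rightarrow>'g. \<forall>t\<in>{}. x t \<in> (\<lambda>_. UNIV) t}" by simp
    then show ?thesis unfolding csetP_def
      by (intro CollectI exI[of _ "{}"] exI[of _ "\<lambda>_::int. UNIV::'g set"]) auto
  qed
  have Bs: "B \<in> sigma_sets UNIV (csetP n)" using B past_sub_csetP by blast
  have cl: "csetP n \<subseteq> Pow UNIV" by simp
  have eq: "emeasure \<nu>1 B = emeasure \<nu>2 B"
    using csetP_Int_stable cl Bs
  proof (induct rule: sigma_sets_induct_disjoint)
    case (basic A) then show ?case by (rule basic_eq)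
  next
    case empty then show ?case by simp
  next
    case (compl A)
    have As: "A \<in> sets mu" using compl(1) csetP_sets by blast
    have "emeasure \<nu>1 (UNIV - A) = emeasure \<nu>1 UNIV - emeasure \<nu>1 A"
      using emeasure_compl[of A \<nu>1] As fin1[OF As] sp1 by simp
    also have "\<dots> = emeasure \<nu>2 UNIV - emeasure \<nu>2 A"
      using basic_eq[OF UNIVc] compl(2) by simp
    also have "\<dots> = emeasure \<nu>2 (UNIV - A)"
      using emeasure_compl[of A \<nu>2] As fin2[OF As] sp2 by simp
    finally show ?case .
  next
    case (union A)
    have As: "range A \<subseteq> sets mu" using union(2) csetP_sets by blast
    have "emeasure \<nu>1 (\<Union>i. A i) = (\<Sum>i. emeasure \<nu>1 (A i))"
      using suminf_emeasure[of A \<nu>1] As union(1) sp1 by simp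
    also have "\<dots> = (\<Sum>i. emeasure \<nu>2 (A i))" using union(3) by simp
    also have "\<dots> = emeasure \<nu>2 (\<Union>i. A i)"
      using suminf_emeasure[of A \<nu>2] As union(1) sp2 by simp
    finally show ?case .
  qed
  have Bmu: "B \<in> sets mu" using Bs csetP_sets by blast
  have "measure mu ({x\<in>space mu. x n = g} \<inter> B) = enn2real (emeasure mu (?E \<inter> B))"
    by (simp add: space_mu measure_def)
  also have "\<dots> = enn2real (emeasure \<nu>2 B)" using e1[OF Bmu] eq by simp
  also have "\<dots> = (\<integral>x. indicator B x * ?h x \<partial>mu)"
    using e2[OF Bmu] by (simp add: integral_nonneg p_nonneg)
  finally show ?thesis .
qed

theorem exists_compat:
  "\<exists>\<mu>. compatible p \<mu> \<and> measure \<mu> {x\<in>space \<mu>. x 0 \<in> C} = 1"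
proof (intro exI conjI)
  show "compatible p mu"
    unfolding compatible_def
    using prob_mu sets_mu meas_past compat_sets by blast
  have w: "wdep 0 (indicator {x. x 0 \<in> C} :: _ \<Rightarrow> real)"
    by (auto simp: wdep_def indicator_def)
  have "measure mu {x\<in>space mu. x 0 \<in> C} = (\<integral>x. indicator {x. x 0 \<in> C} x \<partial>mu)"
    by (simp add: space_mu)
  also have "\<dots> = Lfun 0 (indicator {x. x 0 \<in> C})" by (rule integral_wdep[OF w])
  also have "\<dots> = Lfun 0 (\<lambda>_. 1)"
    by (rule Lfun_cong_C[OF w]) (auto simp: wdep_def)
  also have "\<dots> = 1" by (rule Lfun_one)
  finally show "measure mu {x\<in>space mu. x 0 \<in> C} = 1" .
qed

end

locale imit =
  fixes A :: "nat set" and \<theta> :: "nat \<Rightarrow> real" and P :: "nat \<Rightarrow> 'g::finite \<Rightarrow> 'g \<Rightarrow> real"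
  assumes A_pos: "0 \<notin> A"
    and \<theta>_pos: "\<forall>k\<in>A. \<theta> k > 0"
    and \<theta>_sum: "(\<theta> has_sum 1) A"
    and P_stoch: "\<forall>k\<in>A. stochastic_matrix (P k)"
begin

definition th :: "nat \<Rightarrow> real" where "th k = (if k \<in> A then \<theta> k else 0)"
definition ak :: "'g \<Rightarrow> (nat \<Rightarrow> 'g) \<Rightarrow> nat \<Rightarrow> real" where
  "ak g w k = (if k \<in> A then \<theta> k * P k (w k) g else 0)"

lemma P_nonneg: "k \<in> A \<Longrightarrow> 0 \<le> P k i j"
  using P_stoch by (auto simp: stochastic_matrix_def)

lemma P_sum: "k \<in> A \<Longrightarrow> (\<Sum>j\<in>UNIV. P k i j) = 1"
  using P_stoch by (auto simp: stochastic_matrix_def)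

lemma P_le1: "k \<in> A \<Longrightarrow> P k i j \<le> 1"
proof -
  assume k: "k \<in> A"
  have "P k i j \<le> (\<Sum>j\<in>UNIV. P k i j)"
    by (rule member_le_sum) (auto simp: P_nonneg[OF k])
  then show ?thesis using P_sum[OF k] by simp
qed

lemma th_nonneg: "0 \<le> th k"
  using \<theta>_pos by (auto simp: th_def less_imp_le)

lemma th_has_sum: "(th has_sum 1) UNIV"
proof -
  have "(\<theta> has_sum 1) A \<longleftrightarrow> (th has_sum 1) UNIV"
    by (rule has_sum_cong_neutral) (auto simp: th_def)
  then show ?thesis using \<theta>_sum by simp
qed

lemma th_sums: "th sums 1"
  by (rule has_sum_imp_sums[OF th_has_sum])

lemma th_summable: "summable th"
  using th_sums by (rule sums_summable)

lemma ak_nonneg: "0 \<le> ak g w k"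
proof (cases "k \<in> A")
  case True
  then have "0 \<le> \<theta> k" using \<theta>_pos by (auto simp: less_imp_le)
  moreover have "0 \<le> P k (w k) g" using True by (rule P_nonneg)
  ultimately show ?thesis using True by (simp add: ak_def)
qed (simp add: ak_def)

lemma ak_le: "ak g w k \<le> th k"
proof (cases "k \<in> A")
  case True
  then have "\<theta> k * P k (w k) g \<le> \<theta> k * 1"
    using \<theta>_pos P_le1 by (intro mult_left_mono) (auto simp: less_imp_le)
  then show ?thesis using True by (simp add: ak_def th_def)
qed (simp add: ak_def th_def)

lemma ak_summable: "summable (ak g w)"
  by (rule summable_comparison_test'[OF th_summable]) (use ak_nonneg ak_le in auto)

lemma p_eq: "imitation_kernel A \<theta> P g w = suminf (ak g w)"
proof -
  have "imitation_kernel A \<theta> P g w = infsum (ak g w) UNIV"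
    unfolding imitation_kernel_def by (rule infsum_cong_neutral) (auto simp: ak_def)
  also have "(ak g w has_sum suminf (ak g w)) UNIV"
    by (rule sums_nonneg_imp_has_sum[OF summable_sums[OF ak_summable] ak_nonneg])
  then have "infsum (ak g w) UNIV = suminf (ak g w)" by (simp add: has_sum_iff)
  finally show ?thesis .
qed

lemma kp_nonneg: "0 \<le> imitation_kernel A \<theta> P g w"
  unfolding p_eq by (rule suminf_nonneg[OF ak_summable ak_nonneg])

lemma kp_sum: "(\<Sum>g\<in>UNIV. imitation_kernel A \<theta> P g w) = 1"
proof -
  have "(\<Sum>g\<in>UNIV. imitation_kernel A \<theta> P g w) = (\<Sum>g\<in>UNIV. suminf (ak g w))"
    by (simp add: p_eq)
  also have "\<dots> = (\<Sum>k. \<Sum>g\<in>UNIV. ak g w k)"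
    by (rule suminf_sum[symmetric]) (rule ak_summable)
  also have "(\<lambda>k. \<Sum>g\<in>UNIV. ak g w k) = th"
  proof
    fix k show "(\<Sum>g\<in>UNIV. ak g w k) = th k"
    proof (cases "k \<in> A")
      case True
      then have "(\<Sum>g\<in>UNIV. ak g w k) = \<theta> k * (\<Sum>g\<in>UNIV. P k (w k) g)"
        by (simp add: ak_def sum_distrib_left)
      then show ?thesis using True P_sum by (simp add: th_def)
    qed (simp add: ak_def th_def)
  qed
  also have "suminf th = 1" using th_sums by (rule sums_unique[symmetric])
  finally show ?thesis .
qed

lemma kp_0:
  assumes "\<And>k. k \<ge> 1 \<Longrightarrow> w k = w' k"
  shows "imitation_kernel A \<theta> P g w = imitation_kernel A \<theta> P g w'"
proof -
  have "ak g w = ak g w'"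
  proof
    fix k show "ak g w k = ak g w' k"
    proof (cases "k \<in> A")
      case True
      then have "k \<ge> 1" using A_pos by (cases k) auto
      then show ?thesis using True assms by (simp add: ak_def)
    qed (simp add: ak_def)
  qed
  then show ?thesis by (simp add: p_eq)
qed

lemma kp_cont:
  assumes e: "\<epsilon> > 0"
  shows "\<exists>L. \<forall>w w'. (\<forall>k. 1 \<le> k \<and> k \<le> L \<longrightarrow> w k = w' k) \<longrightarrow>
      \<bar>imitation_kernel A \<theta> P g w - imitation_kernel A \<theta> P g w'\<bar> \<le> \<epsilon>"
proof -
  obtain N where N: "\<forall>n\<ge>N. norm (\<Sum>i. th (i + n)) < \<epsilon>"
    using suminf_exist_split[OF e th_summable] by blast
  show ?thesis
  proof (intro exI allI impI)
    fix w w' :: "nat \<Rightarrow> 'g"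
    assume agree: "\<forall>k. 1 \<le> k \<and> k \<le> N \<longrightarrow> w k = w' k"
    define d where "d k = ak g w k - ak g w' k" for k
    have dz: "d k = 0" if "k < N + 1" for k
    proof (cases "k \<in> A")
      case True
      then have "1 \<le> k" using A_pos by (cases k) auto
      then show ?thesis using that agree True by (simp add: d_def ak_def)
    qed (simp add: d_def ak_def)
    have dabs: "\<bar>d k\<bar> \<le> th k" for k
      using ak_nonneg[of g w k] ak_le[of g w k] ak_nonneg[of g w' k] ak_le[of g w' k]
      by (simp add: d_def abs_le_iff)
    have sd: "summable d" unfolding d_def by (intro summable_diff ak_summable)
    have sad: "summable (\<lambda>k. \<bar>d k\<bar>)"
      by (rule summable_comparison_test'[OF th_summable]) (use dabs in auto)
    have "imitation_kernel A \<theta> P g w - imitation_kernel A \<theta> P g w' = suminf d"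
      unfolding p_eq d_def by (rule suminf_diff[OF ak_summable ak_summable])
    also have "suminf d = (\<Sum>i. d (i + (N+1)))"
      using suminf_split_initial_segment[OF sd, of "N+1"] dz by simp
    finally have eq: "imitation_kernel A \<theta> P g w - imitation_kernel A \<theta> P g w' = (\<Sum>i. d (i + (N+1)))" .
    have sd': "summable (\<lambda>i. \<bar>d (i + (N+1))\<bar>)"
      using sad by (rule summable_ignore_initial_segment)
    have sth': "summable (\<lambda>i. th (i + (N+1)))"
      using th_summable by (rule summable_ignore_initial_segment)
    have "\<bar>\<Sum>i. d (i + (N+1))\<bar> \<le> (\<Sum>i. \<bar>d (i + (N+1))\<bar>)"
      by (rule summable_rabs[OF sd'])
    also have "\<dots> \<le> (\<Sum>i. th (i + (N+1)))"
      by (rule suminf_le[OF _ sd' sth']) (rule dabs)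
    also have "\<dots> < \<epsilon>" using N[rule_format, of "N+1"] by simp
    finally show "\<bar>imitation_kernel A \<theta> P g w - imitation_kernel A \<theta> P g w'\<bar> \<le> \<epsilon>"
      unfolding eq by simp
  qed
qed

end

lemma mmult_id_right: "mmult Q (\<lambda>i j. if i = j then 1 else 0) = Q"
  by (simp add: mmult_def fun_eq_iff if_distrib sum.delta sum.delta' cong: if_cong)

lemma mmult_id_left: "mmult (\<lambda>i j. if i = j then 1 else 0) Q = Q"
proof (rule ext)+
  fix i j
  have "(\<Sum>l\<in>UNIV. (if i = l then 1 else 0) * Q l j) = (\<Sum>l\<in>UNIV. if i = l then Q l j else 0)"
    by (rule sum.cong) auto
  then show "mmult (\<lambda>i j. if i = j then 1 else 0) Q i j = Q i j" by (simp add: mmult_def)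
qed

lemma mmult_assoc: "mmult (mmult Q R) S = mmult Q (mmult R S)"
proof -
  have "(\<Sum>l\<in>UNIV. (\<Sum>m\<in>UNIV. Q i m * R m l) * S l j) = (\<Sum>m\<in>UNIV. Q i m * (\<Sum>l\<in>UNIV. R m l * S l j))"
    for i j
  proof -
    have "(\<Sum>l\<in>UNIV. (\<Sum>m\<in>UNIV. Q i m * R m l) * S l j) = (\<Sum>l\<in>UNIV. \<Sum>m\<in>UNIV. Q i m * R m l * S l j)"
      by (simp add: sum_distrib_right)
    also have "\<dots> = (\<Sum>m\<in>UNIV. \<Sum>l\<in>UNIV. Q i m * R m l * S l j)" by (rule sum.swap)
    also have "\<dots> = (\<Sum>m\<in>UNIV. Q i m * (\<Sum>l\<in>UNIV. R m l * S l j))"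
      by (simp add: sum_distrib_left mult.assoc)
    finally show ?thesis .
  qed
  then show ?thesis by (simp add: mmult_def fun_eq_iff)
qed

lemma wm_append: "word_matrix P (as @ bs) = mmult (word_matrix P bs) (word_matrix P as)"
proof (induction as)
  case Nil then show ?case by (simp add: mmult_id_right)
next
  case (Cons a as) then show ?case by (simp add: mmult_assoc)
qed

context imit
begin

lemma wm_nonneg: "set as \<subseteq> A \<Longrightarrow> 0 \<le> word_matrix P as i j"
proof (induction as arbitrary: i j)
  case Nil then show ?case by simp
next
  case (Cons a as)
  then show ?case
    by (auto simp: mmult_def intro!: sum_nonneg mult_nonneg_nonneg P_nonneg)
qed

lemma comm_trans:
  assumes "communicates A P i l" "communicates A P l j"
  shows "communicates A P i j"
proof -
  obtain as where as: "as \<noteq> []" "set as \<subseteq> A" "word_matrix P as i l > 0"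
    using assms(1) unfolding communicates_def by blast
  obtain bs where bs: "bs \<noteq> []" "set bs \<subseteq> A" "word_matrix P bs l j > 0"
    using assms(2) unfolding communicates_def by blast
  have "word_matrix P (bs @ as) i j = (\<Sum>m\<in>UNIV. word_matrix P as i m * word_matrix P bs m j)"
    by (simp add: wm_append mmult_def)
  also have "\<dots> \<ge> word_matrix P as i l * word_matrix P bs l j"
    by (rule member_le_sum) (auto intro!: mult_nonneg_nonneg wm_nonneg as bs)
  finally have "word_matrix P (bs @ as) i j > 0"
    using as bs by (smt (verit) mult_pos_pos)
  moreover have "bs @ as \<noteq> []" "set (bs @ as) \<subseteq> A" using as bs by auto
  ultimately show ?thesis unfolding communicates_def by blast
qed

lemma ic_sym: "intercommunicate A P i j \<Longrightarrow> intercommunicate A P j i"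
  unfolding intercommunicate_def by auto

lemma ic_trans:
  assumes "intercommunicate A P i l" "intercommunicate A P l j"
  shows "intercommunicate A P i j"
  using assms comm_trans unfolding intercommunicate_def by metis

lemma class_disjoint:
  assumes "{j. intercommunicate A P i1 j} \<noteq> {j. intercommunicate A P i2 j}"
  shows "{j. intercommunicate A P i1 j} \<inter> {j. intercommunicate A P i2 j} = {}"
proof (rule ccontr)
  assume "{j. intercommunicate A P i1 j} \<inter> {j. intercommunicate A P i2 j} \<noteq> {}"
  then obtain x where x: "intercommunicate A P i1 x" "intercommunicate A P i2 x" by blast
  have "intercommunicate A P i1 j \<longleftrightarrow> intercommunicate A P i2 j" for j
    using x ic_sym ic_trans by meson
  then show False using assms by blast
qed

lemma kp_closed:
  assumes cl: "closed_class A P C" and g: "g \<notin> C" and w: "\<And>k. k \<ge> 1 \<Longrightarrow> w k \<in> C"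
  shows "imitation_kernel A \<theta> P g w = 0"
proof -
  have "ak g w k = 0" for k
  proof (cases "k \<in> A")
    case True
    then have k1: "k \<ge> 1" using A_pos by (cases k) auto
    have "P k (w k) g = 0"
    proof (rule ccontr)
      assume "P k (w k) g \<noteq> 0"
      then have pos: "P k (w k) g > 0" using P_nonneg[OF True] by (simp add: less_le)
      have "word_matrix P [k] (w k) g = P k (w k) g" by (simp add: mmult_id_left)
      then have "communicates A P (w k) g" unfolding communicates_def
        using pos True by (intro exI[of _ "[k]"]) auto
      moreover have "w k \<noteq> g" using w[OF k1] g by auto
      ultimately have "g \<in> C" using cl w[OF k1] unfolding closed_class_def by metis
      with g show False by simp
    qed
    then show ?thesis by (simp add: ak_def)
  qed (simp add: ak_def)
  then have "ak g w = (\<lambda>_. 0)" by (simp add: fun_eq_iff)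
  then show ?thesis by (simp add: p_eq)
qed

lemma kern_inst:
  assumes cl: "closed_class A P C" and i: "i \<in> C"
  shows "kern (imitation_kernel A \<theta> P) C i"
proof
  show "\<And>g w. 0 \<le> imitation_kernel A \<theta> P g w" by (rule kp_nonneg)
  show "\<And>w. (\<Sum>g\<in>UNIV. imitation_kernel A \<theta> P g w) = 1" by (rule kp_sum)
  show "\<And>g w w'. (\<And>k. 1 \<le> k \<Longrightarrow> w k = w' k) \<Longrightarrow> imitation_kernel A \<theta> P g w = imitation_kernel A \<theta> P g w'"
    by (rule kp_0)
  show "\<And>g \<epsilon>. 0 < \<epsilon> \<Longrightarrow> \<exists>L. \<forall>w w'. (\<forall>k. 1 \<le> k \<and> k \<le> L \<longrightarrow> w k = w' k) \<longrightarrow>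
      \<bar>imitation_kernel A \<theta> P g w - imitation_kernel A \<theta> P g w'\<bar> \<le> \<epsilon>"
    by (rule kp_cont)
  show "\<And>g w. g \<notin> C \<Longrightarrow> (\<And>k. 1 \<le> k \<Longrightarrow> w k \<in> C) \<Longrightarrow> imitation_kernel A \<theta> P g w = 0"
    by (rule kp_closed[OF cl])
  show "i \<in> C" by (rule i)
qed

end

theorem mainTheorem2:
  fixes A :: "nat set" and \<theta> :: "nat \<Rightarrow> real" and P :: "nat \<Rightarrow> 'g::finite \<Rightarrow> 'g \<Rightarrow> real"
  assumes A_pos: "0 \<notin> A"
    and \<theta>_pos: "\<forall>k\<in>A. \<theta> k > 0"
    and \<theta>_sum: "(\<theta> has_sum 1) A"
    and P_stoch: "\<forall>k\<in>A. stochastic_matrix (P k)"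
    and two_closed: "\<exists>C1 C2. C1 \<noteq> C2 \<and> closed_class A P C1 \<and> closed_class A P C2"
  shows "\<exists>\<mu>1 \<mu>2. \<mu>1 \<in> compatible_laws (imitation_kernel A \<theta> P) \<and>
                 \<mu>2 \<in> compatible_laws (imitation_kernel A \<theta> P) \<and> \<mu>1 \<noteq> \<mu>2"
proof -
  interpret I: imit A \<theta> P using assms by unfold_locales
  obtain C1 C2 where C: "C1 \<noteq> C2" "closed_class A P C1" "closed_class A P C2"
    using two_closed by blast
  obtain i1 where i1: "C1 = {j. intercommunicate A P i1 j}"
    using C(2) unfolding closed_class_def ic_class_def by blast
  obtain i2 where i2: "C2 = {j. intercommunicate A P i2 j}"
    using C(3) unfolding closed_class_def ic_class_def by blast
  have i1C: "i1 \<in> C1" using i1 by (simp add: intercommunicate_def)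
  have i2C: "i2 \<in> C2" using i2 by (simp add: intercommunicate_def)
  have disj: "C1 \<inter> C2 = {}" using I.class_disjoint C(1) i1 i2 by simp
  have K1: "kern (imitation_kernel A \<theta> P) C1 i1" by (rule I.kern_inst[OF C(2) i1C])
  have K2: "kern (imitation_kernel A \<theta> P) C2 i2" by (rule I.kern_inst[OF C(3) i2C])
  obtain \<mu>1 where m1: "compatible (imitation_kernel A \<theta> P) \<mu>1" "measure \<mu>1 {x\<in>space \<mu>1. x 0 \<in> C1} = 1"
    using kern.exists_compat[OF K1] by blast
  obtain \<mu>2 where m2: "compatible (imitation_kernel A \<theta> P) \<mu>2" "measure \<mu>2 {x\<in>space \<mu>2. x 0 \<in> C2} = 1"
    using kern.exists_compat[OF K2] by blast
  have "\<mu>1 \<noteq> \<mu>2"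
  proof
    assume eq: "\<mu>1 = \<mu>2"
    interpret M: prob_space \<mu>1 using m1(1) by (simp add: compatible_def)
    have sets1: "sets \<mu>1 = sets path_space" using m1(1) by (simp add: compatible_def)
    have sp: "space \<mu>1 = UNIV" using sets_eq_imp_space_eq[OF sets1] by (simp add: space_path)
    have S1: "{x\<in>space \<mu>1. x 0 \<in> C1} \<in> sets \<mu>1"
      using kern.cset_path[OF K1, of "{0}" "\<lambda>_. C1"] by (simp add: sets1 sp)
    have S2: "{x\<in>space \<mu>1. x 0 \<in> C2} \<in> sets \<mu>1"
      using kern.cset_path[OF K2, of "{0}" "\<lambda>_. C2"] by (simp add: sets1 sp)
    have sub: "{x\<in>space \<mu>1. x 0 \<in> C2} \<subseteq> space \<mu>1 - {x\<in>space \<mu>1. x 0 \<in> C1}"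
      using disj by auto
    have "measure \<mu>1 {x\<in>space \<mu>1. x 0 \<in> C2} \<le> measure \<mu>1 (space \<mu>1 - {x\<in>space \<mu>1. x 0 \<in> C1})"
      by (rule M.finite_measure_mono[OF sub]) (use S1 in auto)
    also have "\<dots> = 1 - measure \<mu>1 {x\<in>space \<mu>1. x 0 \<in> C1}"
      by (rule M.prob_compl[OF S1])
    also have "\<dots> = 0" using m1(2) by simp
    finally show False using m2(2) eq by simp
  qed
  then show ?thesis using m1(1) m2(1) unfolding compatible_laws_def by blast
qed


end
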